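(* Let $(w_n)_{n\ge 0}$ be nonnegative reals with $W(z)=\sum_{n\ge0}w_nz^n$, and assume there are $\rho_w>0$ and a slowly varying $L_w$ with $w_n\sim L_w(n)n^{-1}\rho_w^{-n}$ and $W(\rho_w)\in(0,\infty)$. Let $X$ have probability generating function $W(\rho_w z)/W(\rho_w)$. Consider the condition $$(\ast)\qquad \lim_{n\to\infty}\frac{\mathbb{P}(X>n^t)}{\mathbb{P}(X>n)}\ \text{exists for all } 0<t<1.$$ (1) $(\ast)$ holds if and only if there exists $\gamma\ge0$ with $\lim_{n\to\infty}\mathbb{P}(X>n^t)/\mathbb{P}(X>n)=t^{-\gamma}$ for all $0<t<1$. (2) If there are $\gamma>0$ and a slowly varying function $L$ with $L_w(n)=L(\log n)/\log^{1+\gamma}n$, then $\lim_{n\to\infty}\mathbb{P}(X>n^t)/\mathbb{P}(X>n)=t^{-\gamma}$ for all $0<t<1$ with this $\gamma$, and in this case $\mathbb{P}(X>n)\sim W(\rho_w)^{-1}\,\dfrac{L(\log n)}{\gamma\log^\gamma n}$. (3) If $L_w$ is eventually monotone and $\lim_{n\to\infty}\mathbb{P}(X>n^t)/\mathbb{P}(X>n)=t^{-\gamma}$ for all $0<t<1$ with some $\gamma>0$, then there is a slowly varying function $L$ with $L_w(n)=L(\log n)/\log^{1+\gamma}n$.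
   Context: Slowly varying means slowly varying at infinity. Limits are over integers $n\to\infty$. *)

theory Defs
  imports "HOL-Analysis.Analysis" "HOL-Library.Landau_Symbols"
begin

definition slowly_varying :: "(real \<Rightarrow> real) \<Rightarrow> bool" where
  "slowly_varying L \<longleftrightarrow>
     (\<exists>a. (\<forall>x\<ge>a. L x > 0) \<and> (\<lambda>x. if a \<le> x then L x else 0) \<in> borel_measurable borel) \<and>
     (\<forall>c>0. ((\<lambda>x. L (c * x) / L x) \<longlongrightarrow> 1) at_top)"

definition gen_fun :: "(nat \<Rightarrow> real) \<Rightarrow> real \<Rightarrow> real" where
  "gen_fun w z = (\<Sum>n. w n * z ^ n)"

text \<open>Tail P(X > x) of the random variable X with probability generating function
  W(rho z)/W(rho), i.e. P(X = k) = w_k rho^k / W(rho).\<close>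
definition tail_prob :: "(nat \<Rightarrow> real) \<Rightarrow> real \<Rightarrow> real \<Rightarrow> real" where
  "tail_prob w \<rho> x = (\<Sum>k. if real k > x then w k * \<rho> ^ k else 0) / gen_fun w \<rho>"

end

theory Submission
  imports Defs "HOL-Real_Asymp.Real_Asymp"
begin


definition St :: "(nat \<Rightarrow> real) \<Rightarrow> real \<Rightarrow> real" where
  "St a x = (\<Sum>k. if real k > x then a k else 0)"

locale tailseq =
  fixes a :: "nat \<Rightarrow> real"
  assumes a_nonneg: "\<And>k. a k \<ge> 0" and a_summable: "summable a"
begin

lemma St_summable: "summable (\<lambda>k. if real k > x then a k else 0)"
  by (rule summable_comparison_test'[OF a_summable, of 0]) (use a_nonneg in auto)

lemma St_nonneg: "St a x \<ge> 0"
  unfolding St_def by (rule suminf_nonneg[OF St_summable]) (use a_nonneg in auto)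

lemma St_mono: "x \<le> y \<Longrightarrow> St a y \<le> St a x"
  unfolding St_def by (rule suminf_le[OF _ St_summable St_summable]) (use a_nonneg in auto)

lemma St_floor: assumes "x \<ge> 0" shows "St a x = St a (real (nat \<lfloor>x\<rfloor>))"
proof -
  have "real k > x \<longleftrightarrow> real k > real (nat \<lfloor>x\<rfloor>)" for k
  proof -
    have "real k > x \<longleftrightarrow> \<lfloor>x\<rfloor> < int k" by (simp add: floor_less_iff)
    moreover have "real (nat \<lfloor>x\<rfloor>) = of_int \<lfloor>x\<rfloor>" using assms by simp
    ultimately show ?thesis by (metis of_int_less_iff of_int_of_nat_eq)
  qed
  then show ?thesis unfolding St_def by simp
qed

lemma St_diff: assumes "m \<le> n" shows "St a (real m) = (\<Sum>k\<in>{m<..n}. a k) + St a (real n)"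
proof -
  have e: "(\<lambda>k. if real k > real m then a k else 0) = (\<lambda>k. (if k \<in> {m<..n} then a k else 0) + (if real k > real n then a k else 0))"
    using assms by (auto simp: fun_eq_iff)
  have s1: "summable (\<lambda>k. if k \<in> {m<..n} then a k else 0)"
    by (rule summable_finite[of "{m<..n}"]) auto
  have "(\<Sum>k. if k \<in> {m<..n} then a k else 0) = (\<Sum>k\<in>{m<..n}. a k)"
    by (subst suminf_finite[of "{m<..n}"]) auto
  then show ?thesis unfolding St_def e
    by (subst suminf_add[symmetric, OF s1 St_summable]) simp
qed

lemma St_lim0: "(\<lambda>n. St a (real n)) \<longlonglongrightarrow> 0"
proof -
  have e: "St a (real n) = suminf a - (\<Sum>k\<le>n. a k)" for n
  proof -
    have "St a (real 0) = (\<Sum>k\<in>{0<..n}. a k) + St a (real n)" by (rule St_diff) simp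
    moreover have "St a (real 0) = suminf a - a 0"
    proof -
      have "St a (real 0) = (\<Sum>k. a (Suc k))"
        unfolding St_def using suminf_split_head[OF St_summable, of 0] by simp
      also have "\<dots> = suminf a - a 0" by (rule suminf_split_head[OF a_summable])
      finally show ?thesis .
    qed
    moreover have "(\<Sum>k\<le>n. a k) = a 0 + (\<Sum>k\<in>{0<..n}. a k)"
    proof -
      have "{..n} = insert 0 {0<..n}" by auto
      then show ?thesis by simp
    qed
    ultimately show ?thesis by simp
  qed
  have "(\<lambda>n. suminf a - (\<Sum>k\<le>n. a k)) \<longlonglongrightarrow> suminf a - suminf a"
    by (intro tendsto_intros summable_LIMSEQ'[OF a_summable])
  then show ?thesis unfolding e by simp
qed

lemma St_pos: assumes "eventually (\<lambda>k. a k > 0) sequentially" shows "St a x > 0"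
proof -
  obtain K where K: "\<And>k. k \<ge> K \<Longrightarrow> a k > 0" using assms by (auto simp: eventually_at_top_linorder)
  define k where "k = max K (nat \<lceil>x\<rceil> + 1)"
  have "real k > x" unfolding k_def by linarith
  moreover have "a k > 0" using K unfolding k_def by simp
  ultimately have "\<exists>i. 0 < (if real i > x then a i else 0)" by (intro exI[of _ k]) simp
  then show ?thesis unfolding St_def
    by (subst suminf_pos_iff[OF St_summable]) (use a_nonneg in auto)
qed

end


lemma le_of_forall_seq:
  fixes x c d :: real
  assumes "\<And>n. x \<le> c + d / real (Suc n)"
  shows "x \<le> c"
proof -
  have "(\<lambda>n. d / real (Suc n)) \<longlonglongrightarrow> 0" using LIMSEQ_Suc[OF lim_const_over_n[of d]] by simp
  then have "(\<lambda>n. c + d / real (Suc n)) \<longlonglongrightarrow> c + 0" by (intro tendsto_intros)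
  then have "(\<lambda>n. c + d / real (Suc n)) \<longlonglongrightarrow> c" by simp
  then show ?thesis using assms by (intro LIMSEQ_le_const[of _ c]) auto
qed

lemma phi_linear:
  fixes \<phi> :: "real \<Rightarrow> real"
  assumes mono: "\<And>a b. 0 < a \<Longrightarrow> a \<le> b \<Longrightarrow> \<phi> a \<le> \<phi> b"
    and nonneg: "\<And>a. a > 0 \<Longrightarrow> \<phi> a \<ge> 0"
    and sub: "\<And>a b. a > 0 \<Longrightarrow> b > 0 \<Longrightarrow> \<phi> (a + b) \<le> \<phi> a + \<phi> b"
    and sup: "\<And>a' a b. 0 < a' \<Longrightarrow> a' < a \<Longrightarrow> b > 0 \<Longrightarrow> \<phi> a' + \<phi> b \<le> \<phi> (a + b)"
  shows "\<exists>\<gamma>\<ge>0. \<forall>u>0. \<phi> u = \<gamma> * u"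
proof -
  have i: "\<phi> (real (Suc n) * a) \<le> real (Suc n) * \<phi> a" if "a > 0" for n a
  proof (induction n)
    case (Suc n)
    have "\<phi> (real (Suc (Suc n)) * a) = \<phi> (a + real (Suc n) * a)" by (simp add: algebra_simps)
    also have "\<dots> \<le> \<phi> a + \<phi> (real (Suc n) * a)" using that by (intro sub) auto
    also have "\<dots> \<le> \<phi> a + real (Suc n) * \<phi> a" using Suc by simp
    finally show ?case by (simp add: algebra_simps)
  qed simp
  have ii: "real (Suc n) * \<phi> a' \<le> \<phi> (real (Suc n) * a)" if "0 < a'" "a' < a" for n a a'
  proof (induction n)
    case 0 then show ?case using mono that by simp
  next
    case (Suc n)
    have "real (Suc (Suc n)) * \<phi> a' = \<phi> a' + real (Suc n) * \<phi> a'" by (simp add: algebra_simps)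
    also have "\<dots> \<le> \<phi> a' + \<phi> (real (Suc n) * a)" using Suc by simp
    also have "\<dots> \<le> \<phi> (a + real (Suc n) * a)" using that by (intro sup) auto
    finally show ?case by (simp add: algebra_simps)
  qed
  have iii: "\<phi> a' \<le> a / b * \<phi> b" if "0 < a'" "a' < a" "b > 0" for a a' b
  proof (rule le_of_forall_seq[where d = "\<phi> b"])
    fix n
    define N where "N = real (Suc n)"
    have Npos: "N > 0" unfolding N_def by simp
    define m where "m = nat \<lceil>N * a / b\<rceil>"
    have mge: "real m \<ge> N * a / b" unfolding m_def by linarith
    have mle: "real m \<le> N * a / b + 1" unfolding m_def using Npos that by (simp add: of_nat_nat)
    have "N * a / b > 0" using Npos that by simp
    then have mpos: "m > 0" using mge by (metis gr0I of_nat_0 order_less_le_trans order_less_irrefl)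
    then obtain m' where m': "m = Suc m'" using not0_implies_Suc by blast
    have "N * \<phi> a' \<le> \<phi> (N * a)" unfolding N_def using ii that by simp
    also have "\<dots> \<le> \<phi> (real m * b)"
      using mge that Npos by (intro mono) (auto simp: field_simps)
    also have "\<dots> \<le> real m * \<phi> b" using i[of b m'] that m' by simp
    also have "\<dots> \<le> (N * a / b + 1) * \<phi> b" using mle nonneg[of b] that by (intro mult_right_mono) auto
    finally have "N * \<phi> a' \<le> (N * a / b + 1) * \<phi> b" .
    then have "\<phi> a' \<le> ((N * a / b + 1) * \<phi> b) / N" using Npos by (simp add: field_simps)
    also have "\<dots> = a / b * \<phi> b + \<phi> b / N" using Npos by (simp add: field_simps)
    finally show "\<phi> a' \<le> a / b * \<phi> b + \<phi> b / real (Suc n)" unfolding N_def .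
  qed
  have iv: "\<phi> a' \<le> a' * (\<phi> b / b)" if "0 < a'" "b > 0" for a' b
  proof -
    have "(\<lambda>n. (a' + 1 / real (Suc n)) * (\<phi> b / b)) \<longlonglongrightarrow> (a' + 0) * (\<phi> b / b)"
      by (intro tendsto_intros LIMSEQ_Suc[OF lim_inverse_n'[unfolded inverse_eq_divide]])
    moreover have "\<phi> a' \<le> (a' + 1 / real (Suc n)) * (\<phi> b / b)" for n
      using iii[of a' "a' + 1 / real (Suc n)" b] that by simp
    ultimately show ?thesis by (intro LIMSEQ_le_const[of _ "a' * (\<phi> b / b)"]) auto
  qed
  show ?thesis
  proof (intro exI[of _ "\<phi> 1"] conjI allI impI)
    show "\<phi> 1 \<ge> 0" using nonneg by simp
    fix u :: real assume u: "u > 0"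
    have "\<phi> u \<le> u * \<phi> 1" using iv[of u 1] u by simp
    moreover have "\<phi> 1 \<le> \<phi> u / u" using iv[of 1 u] u by simp
    then have "\<phi> 1 * u \<le> \<phi> u" using u by (simp add: field_simps)
    ultimately show "\<phi> u = \<phi> 1 * u" by (simp add: mult.commute)
  qed
qed

lemma g_powr:
  fixes g :: "real \<Rightarrow> real"
  assumes g1: "\<And>t. 0 < t \<Longrightarrow> t < 1 \<Longrightarrow> g t \<ge> 1"
    and gmono: "\<And>s t. 0 < s \<Longrightarrow> s \<le> t \<Longrightarrow> t < 1 \<Longrightarrow> g t \<le> g s"
    and gsub: "\<And>s t. 0 < s \<Longrightarrow> s < 1 \<Longrightarrow> 0 < t \<Longrightarrow> t < 1 \<Longrightarrow> g (s * t) \<le> g s * g t"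
    and gsup: "\<And>s s' t. 0 < s \<Longrightarrow> s < s' \<Longrightarrow> s' < 1 \<Longrightarrow> 0 < t \<Longrightarrow> t < 1 \<Longrightarrow> g s' * g t \<le> g (s * t)"
  shows "\<exists>\<gamma>\<ge>0. \<forall>t. 0 < t \<and> t < 1 \<longrightarrow> g t = t powr (- \<gamma>)"
proof -
  define \<phi> where "\<phi> u = ln (g (exp (- u)))" for u
  have e1: "0 < exp (- u)" for u :: real by simp
  have e2: "exp (- u) < 1" if "u > 0" for u :: real using that by simp
  note e = e1 e2
  have gpos: "g (exp (- u)) > 0" if "u > 0" for u using g1[OF e1 e2[OF that]] by simp
  have "\<exists>\<gamma>\<ge>0. \<forall>u>0. \<phi> u = \<gamma> * u"
  proof (rule phi_linear)
    fix a b :: real assume ab: "0 < a" "a \<le> b"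
    then have "g (exp (- a)) \<le> g (exp (- b))" using e by (intro gmono) auto
    then show "\<phi> a \<le> \<phi> b" unfolding \<phi>_def using gpos ab by simp
  next
    fix a :: real assume "a > 0"
    then show "\<phi> a \<ge> 0" unfolding \<phi>_def using g1[OF e1 e2[OF \<open>a > 0\<close>]] by simp
  next
    fix a b :: real assume ab: "a > 0" "b > 0"
    have "exp (- (a + b)) = exp (- a) * exp (- b)" by (simp add: exp_add[symmetric])
    then have "g (exp (- (a + b))) \<le> g (exp (- a)) * g (exp (- b))"
      using ab e by (metis gsub)
    moreover have p: "g (exp (- (a + b))) > 0" "g (exp (-a)) > 0" "g (exp (-b)) > 0"
      using gpos[of "a+b"] gpos[of a] gpos[of a'] gpos[of b] ab by auto
    ultimately have "ln (g (exp (- (a + b)))) \<le> ln (g (exp (- a)) * g (exp (- b)))"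
      by simp
    then show "\<phi> (a + b) \<le> \<phi> a + \<phi> b" unfolding \<phi>_def
      using p by (simp add: ln_mult)
  next
    fix a' a b :: real assume ab: "0 < a'" "a' < a" "b > 0"
    have "exp (- (a + b)) = exp (- a) * exp (- b)" by (simp add: exp_add[symmetric])
    moreover have "g (exp (- a')) * g (exp (- b)) \<le> g (exp (- a) * exp (- b))"
      using ab e by (intro gsup) auto
    ultimately have "g (exp (- a')) * g (exp (- b)) \<le> g (exp (- (a + b)))" by simp
    moreover have p: "g (exp (- (a + b))) > 0" "g (exp (-a')) > 0" "g (exp (-b)) > 0"
      using gpos[of "a+b"] gpos[of a] gpos[of a'] gpos[of b] ab by auto
    ultimately have "ln (g (exp (- a')) * g (exp (- b))) \<le> ln (g (exp (- (a + b))))"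
      by simp
    then show "\<phi> a' + \<phi> b \<le> \<phi> (a + b)" unfolding \<phi>_def
      using p by (simp add: ln_mult)
  qed
  then obtain \<gamma> where \<gamma>: "\<gamma> \<ge> 0" "\<And>u. u > 0 \<Longrightarrow> \<phi> u = \<gamma> * u" by blast
  show ?thesis
  proof (intro exI[of _ \<gamma>] conjI allI impI)
    fix t :: real assume t: "0 < t \<and> t < 1"
    define u where "u = - ln t"
    have u: "u > 0" unfolding u_def using t by simp
    have et: "exp (- u) = t" unfolding u_def using t by simp
    have "g t = exp (\<phi> u)" unfolding \<phi>_def et using g1[of t] t by simp
    also have "\<dots> = exp (\<gamma> * u)" using \<gamma>(2)[OF u] by simp
    also have "\<dots> = t powr (- \<gamma>)" unfolding u_def powr_def using t by simp
    finally show "g t = t powr (- \<gamma>)" .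
  qed (use \<gamma> in auto)
qed

lemma filterlim_nat_floor_powr:
  assumes "t > 0"
  shows "filterlim (\<lambda>n::nat. nat \<lfloor>real n powr t\<rfloor>) sequentially sequentially"
proof -
  have "filterlim (\<lambda>n::nat. real n powr t) at_top sequentially" using assms by real_asymp
  then show ?thesis
    by (intro filterlim_compose[OF filterlim_nat_sequentially] filterlim_compose[OF filterlim_floor_sequentially])
qed

context tailseq
begin

lemma part1:
  assumes apos: "eventually (\<lambda>k. a k > 0) sequentially"
  shows "(\<forall>t. 0 < t \<and> t < 1 \<longrightarrow> convergent (\<lambda>n. St a (real n powr t) / St a (real n)))
      \<longleftrightarrow> (\<exists>\<gamma>\<ge>0. \<forall>t. 0 < t \<and> t < 1 \<longrightarrow>
          (\<lambda>n. St a (real n powr t) / St a (real n)) \<longlonglongrightarrow> t powr (- \<gamma>))"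
proof
  assume "\<exists>\<gamma>\<ge>0. \<forall>t. 0 < t \<and> t < 1 \<longrightarrow>
          (\<lambda>n. St a (real n powr t) / St a (real n)) \<longlonglongrightarrow> t powr (- \<gamma>)"
  then show "\<forall>t. 0 < t \<and> t < 1 \<longrightarrow> convergent (\<lambda>n. St a (real n powr t) / St a (real n))"
    by (auto intro: convergentI)
next
  assume conv: "\<forall>t. 0 < t \<and> t < 1 \<longrightarrow> convergent (\<lambda>n. St a (real n powr t) / St a (real n))"
  define R where "R t n = St a (real n powr t) / St a (real n)" for t n
  define g where "g t = lim (R t)" for t
  have Rg: "R t \<longlonglongrightarrow> g t" if "0 < t" "t < 1" for t
    using conv that unfolding g_def R_def by (simp add: convergent_LIMSEQ_iff)
  have Spos: "St a x > 0" for x by (rule St_pos[OF apos])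
  define m where "m t n = nat \<lfloor>real n powr t\<rfloor>" for t n
  have mlim: "filterlim (m t) sequentially sequentially" if "t > 0" for t
    unfolding m_def by (rule filterlim_nat_floor_powr[OF that])
  have m_le: "real (m t n) \<le> real n powr t" for t n unfolding m_def by simp
  have m_gt: "real n powr t < real (m t n) + 1" for t n unfolding m_def by simp
  have Sm: "St a (real n powr t) = St a (real (m t n))" for t n
    unfolding m_def by (rule St_floor) simp
  have ev1: "eventually (\<lambda>n::nat. n \<ge> 1) sequentially" by (rule eventually_ge_at_top)
  show "\<exists>\<gamma>\<ge>0. \<forall>t. 0 < t \<and> t < 1 \<longrightarrow>
          (\<lambda>n. St a (real n powr t) / St a (real n)) \<longlonglongrightarrow> t powr (- \<gamma>)"
  proof -
    have "\<exists>\<gamma>\<ge>0. \<forall>t. 0 < t \<and> t < 1 \<longrightarrow> g t = t powr (- \<gamma>)"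
    proof (rule g_powr)
      fix t :: real assume t: "0 < t" "t < 1"
      have "eventually (\<lambda>n. 1 \<le> R t n) sequentially"
        using ev1
      proof eventually_elim
        case (elim n)
        have "real n powr t \<le> real n powr 1" using elim t by (intro powr_mono) auto
        then have "St a (real n) \<le> St a (real n powr t)" using elim by (intro St_mono) simp
        then show ?case unfolding R_def using Spos[of "real n"] by simp
      qed
      then show "g t \<ge> 1" by (intro tendsto_le[OF _ Rg[OF t] tendsto_const]) auto
    next
      fix s t :: real assume st: "0 < s" "s \<le> t" "t < 1"
      have "eventually (\<lambda>n. R t n \<le> R s n) sequentially"
        using ev1
      proof eventually_elim
        case (elim n)
        have "real n powr s \<le> real n powr t" using elim st by (intro powr_mono) auto
        then have "St a (real n powr t) \<le> St a (real n powr s)" by (rule St_mono)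
        then show ?case unfolding R_def using Spos[of "real n"] by (simp add: divide_right_mono)
      qed
      then show "g t \<le> g s" using st by (intro tendsto_le[OF _ Rg Rg]) auto
    next
      fix s t :: real assume st: "0 < s" "s < 1" "0 < t" "t < 1"
      have "eventually (\<lambda>n. R (s * t) n \<le> R s (m t n) * R t n) sequentially"
      proof (intro always_eventually allI)
        fix n
        have "real (m t n) powr s \<le> (real n powr t) powr s"
          using m_le by (intro powr_mono2) (use st in auto)
        also have "\<dots> = real n powr (s * t)" by (simp add: powr_powr mult.commute)
        finally have "St a (real n powr (s * t)) \<le> St a (real (m t n) powr s)" by (rule St_mono)
        moreover have "R s (m t n) * R t n = St a (real (m t n) powr s) / St a (real n)"
          unfolding R_def Sm[of n t] using Spos[of "real (m t n)"] by simp
        ultimately show "R (s * t) n \<le> R s (m t n) * R t n"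
          unfolding R_def using Spos[of "real n"] by (simp add: divide_right_mono)
      qed
      moreover have "(\<lambda>n. R s (m t n) * R t n) \<longlonglongrightarrow> g s * g t"
        by (intro tendsto_mult filterlim_compose[OF Rg[OF st(1,2)] mlim] Rg st)
      moreover have "s * t < 1" using mult_strict_mono[of s 1 t 1] st by simp
      ultimately show "g (s * t) \<le> g s * g t"
        using st by (intro tendsto_le[OF _ _ Rg]) auto
    next
      fix s s' t :: real assume st: "0 < s" "s < s'" "s' < 1" "0 < t" "t < 1"
      have "eventually (\<lambda>k::nat. (real k + 1) powr s \<le> real k powr s') sequentially"
        using st by real_asymp
      then have "eventually (\<lambda>n. (real (m t n) + 1) powr s \<le> real (m t n) powr s') sequentially"
        by (rule eventually_compose_filterlim[OF _ mlim[OF st(4)]])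
      then have "eventually (\<lambda>n. R s' (m t n) * R t n \<le> R (s * t) n) sequentially"
      proof eventually_elim
        case (elim n)
        have "real n powr (s * t) = (real n powr t) powr s" by (simp add: powr_powr mult.commute)
        also have "\<dots> \<le> (real (m t n) + 1) powr s"
          using m_gt[of n t] st by (intro powr_mono2) auto
        also have "\<dots> \<le> real (m t n) powr s'" by (rule elim)
        finally have "St a (real (m t n) powr s') \<le> St a (real n powr (s * t))" by (rule St_mono)
        moreover have "R s' (m t n) * R t n = St a (real (m t n) powr s') / St a (real n)"
          unfolding R_def Sm[of n t] using Spos[of "real (m t n)"] by simp
        ultimately show ?case
          unfolding R_def using Spos[of "real n"] by (simp add: divide_right_mono)
      qed
      moreover have "(\<lambda>n. R s' (m t n) * R t n) \<longlonglongrightarrow> g s' * g t"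
        using st by (intro tendsto_mult filterlim_compose[OF Rg mlim] Rg) auto
      moreover have "s * t < 1" using mult_strict_mono[of s 1 t 1] st by simp
      ultimately show "g s' * g t \<le> g (s * t)"
        using st by (intro tendsto_le[OF _ Rg]) auto
    qed
    then obtain \<gamma> where \<gamma>: "\<gamma> \<ge> 0" "\<And>t. 0 < t \<and> t < 1 \<Longrightarrow> g t = t powr (- \<gamma>)" by blast
    show ?thesis
      using \<gamma> Rg unfolding R_def by (intro exI[of _ \<gamma>]) auto
  qed
qed

end


lemma trans_inv:
  fixes A :: "real set"
  assumes "A \<in> sets borel"
  shows "measure lborel ((\<lambda>x. c + x) -` A) = measure lborel A"
proof -
  have "measure (distr lborel borel ((+) c)) A = measure lborel ((+) c -` A \<inter> space lborel)"
    by (rule measure_distr) (use assms in auto)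
  then show ?thesis by (simp add: lborel_distr_plus)
qed

lemma Icc_fmeas: "{a..b::real} \<in> fmeasurable lborel"
  by (cases "a \<le> b") (auto simp: fmeasurable_def)

lemma big_set:
  fixes h :: "real \<Rightarrow> real" and z :: "nat \<Rightarrow> real"
  assumes meas[measurable]: "h \<in> borel_measurable borel"
    and pw: "\<And>u. 0 \<le> u \<Longrightarrow> u \<le> 2 \<Longrightarrow> ((\<lambda>x. h (x + u) - h x) \<longlongrightarrow> 0) at_top"
    and z: "filterlim z at_top sequentially" and \<delta>: "\<delta> > 0"
  shows "\<exists>k. measure lborel {v \<in> {0..2}. \<forall>n\<ge>k. \<bar>h (z n + v) - h (z n)\<bar> < \<delta>} > 7/4"
proof -
  define U where "U k = {v \<in> {0..2}. \<forall>n\<ge>k. \<bar>h (z n + v) - h (z n)\<bar> < \<delta>}" for k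
  have Us: "U k \<in> sets lborel" for k unfolding U_def by measurable
  have inc: "incseq U" unfolding incseq_def U_def by auto
  have Un: "(\<Union>k. U k) = {0..2}"
  proof
    show "(\<Union>k. U k) \<subseteq> {0..2}" unfolding U_def by auto
    show "{0..2} \<subseteq> (\<Union>k. U k)"
    proof
      fix v :: real assume v: "v \<in> {0..2}"
      have "(\<lambda>n. h (z n + v) - h (z n)) \<longlonglongrightarrow> 0"
        using filterlim_compose[OF pw z] v by auto
      then have "eventually (\<lambda>n. \<bar>h (z n + v) - h (z n)\<bar> < \<delta>) sequentially"
        using \<delta> by (auto simp: tendsto_iff dist_real_def)
      then obtain k where "\<forall>n\<ge>k. \<bar>h (z n + v) - h (z n)\<bar> < \<delta>"
        by (auto simp: eventually_sequentially)
      then show "v \<in> (\<Union>k. U k)" using v unfolding U_def by auto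
    qed
  qed
  have "(\<lambda>k. measure lborel (U k)) \<longlonglongrightarrow> measure lborel (\<Union>k. U k)"
    by (rule Lim_measure_incseq) (use Us inc Un in auto)
  then have "(\<lambda>k. measure lborel (U k)) \<longlonglongrightarrow> 2" unfolding Un by simp
  then have "eventually (\<lambda>k. measure lborel (U k) > 7/4) sequentially"
    by (rule order_tendstoD) simp
  then obtain k where "measure lborel (U k) > 7/4" by (auto simp: eventually_sequentially)
  then show ?thesis unfolding U_def by blast
qed

lemma uct_additive:
  fixes h :: "real \<Rightarrow> real"
  assumes meas[measurable]: "h \<in> borel_measurable borel"
    and pw: "\<And>u. 0 \<le> u \<Longrightarrow> u \<le> 2 \<Longrightarrow> ((\<lambda>x. h (x + u) - h x) \<longlongrightarrow> 0) at_top"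
    and \<epsilon>: "\<epsilon> > 0"
  shows "\<exists>X. \<forall>x\<ge>X. \<forall>u. 0 \<le> u \<and> u \<le> 1 \<longrightarrow> \<bar>h (x + u) - h x\<bar> < \<epsilon>"
proof (rule ccontr)
  assume "\<not> ?thesis"
  then have "\<forall>n::nat. \<exists>p. fst p \<ge> real n \<and> 0 \<le> snd p \<and> snd p \<le> 1 \<and> \<bar>h (fst p + snd p) - h (fst p)\<bar> \<ge> \<epsilon>"
    by (metis fst_conv snd_conv not_less)
  then obtain P where P: "\<And>n. fst (P n) \<ge> real n \<and> 0 \<le> snd (P n) \<and> snd (P n) \<le> 1 \<and> \<bar>h (fst (P n) + snd (P n)) - h (fst (P n))\<bar> \<ge> \<epsilon>"
    by metis
  define x where "x n = fst (P n)" for n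
  define u where "u n = snd (P n)" for n
  define y where "y n = x n + u n" for n
  have P': "x n \<ge> real n" "0 \<le> u n" "u n \<le> 1" "\<bar>h (y n) - h (x n)\<bar> \<ge> \<epsilon>" for n
    using P[of n] unfolding x_def u_def y_def by auto
  have xlim: "filterlim x at_top sequentially"
    by (rule filterlim_at_top_mono[OF filterlim_real_sequentially]) (use P' in auto)
  have ylim: "filterlim y at_top sequentially"
    by (rule filterlim_at_top_mono[OF filterlim_real_sequentially]) (use P' in \<open>auto simp: y_def intro!: always_eventually add_increasing2\<close>)
  define U where "U k = {v \<in> {0..2}. \<forall>n\<ge>k. \<bar>h (x n + v) - h (x n)\<bar> < \<epsilon>/2}" for k
  define V where "V k = {v \<in> {0..2}. \<forall>n\<ge>k. \<bar>h (y n + v) - h (y n)\<bar> < \<epsilon>/2}" for k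
  obtain k1 where k1: "measure lborel (U k1) > 7/4"
    using big_set[OF meas pw xlim, of "\<epsilon>/2"] \<epsilon> unfolding U_def by auto
  obtain k2 where k2: "measure lborel (V k2) > 7/4"
    using big_set[OF meas pw ylim, of "\<epsilon>/2"] \<epsilon> unfolding V_def by auto
  define n where "n = max k1 k2"
  define c where "c = u n"
  have c: "0 \<le> c" "c \<le> 1" unfolding c_def using P' by auto
  have Us: "U k \<in> sets lborel" for k unfolding U_def by measurable
  have Vs: "V k \<in> sets lborel" for k unfolding V_def by measurable
  define A where "A = U k1 \<inter> {c..2}"
  define V' where "V' = V k2 \<inter> {0..2-c}"
  define B where "B = (\<lambda>v. - c + v) -` V'"
  have As: "A \<in> sets lborel" unfolding A_def using Us by simp
  have V's: "V' \<in> sets lborel" unfolding V'_def using Vs by simp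
  have Bs: "B \<in> sets lborel"
  proof -
    have "(\<lambda>v::real. - c + v) \<in> borel_measurable borel" by measurable
    moreover have e: "(+) (- c) = (\<lambda>v::real. v - c)" by auto
    ultimately show ?thesis using measurable_sets[of "\<lambda>v::real. - c + v" borel borel V'] V's
      unfolding B_def by (simp add: e)
  qed
  have Bsub: "B \<subseteq> {c..2}" unfolding B_def V'_def V_def by auto
  have mB: "measure lborel B = measure lborel V'" unfolding B_def
    by (rule trans_inv) (use V's in simp)
  have mA: "measure lborel (U k1) \<le> measure lborel A + c"
  proof -
    have "U k1 \<subseteq> A \<union> {0..c}" unfolding A_def U_def by auto
    then have "measure lborel (U k1) \<le> measure lborel (A \<union> {0..c})"
      by (intro measure_mono_fmeasurable Us fmeasurableI2[OF Icc_fmeas[of 0 2]])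
         (use As c in \<open>auto simp: A_def U_def\<close>)
    also have "\<dots> \<le> measure lborel A + measure lborel {0..c}" by (rule measure_Un_le) (use As in auto)
    finally show ?thesis using c by simp
  qed
  have mV: "measure lborel (V k2) \<le> measure lborel V' + c"
  proof -
    have "V k2 \<subseteq> V' \<union> {2-c..2}" unfolding V'_def V_def by auto
    then have "measure lborel (V k2) \<le> measure lborel (V' \<union> {2-c..2})"
      by (intro measure_mono_fmeasurable Vs fmeasurableI2[OF Icc_fmeas[of 0 2]])
         (use V's c in \<open>auto simp: V'_def V_def\<close>)
    also have "\<dots> \<le> measure lborel V' + measure lborel {2-c..2}" by (rule measure_Un_le) (use V's in auto)
    finally show ?thesis using c by simp
  qed
  have "A \<inter> B \<noteq> {}"
  proof
    assume dis: "A \<inter> B = {}"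
    have Af: "A \<in> fmeasurable lborel" using As by (intro fmeasurableI2[OF Icc_fmeas[of c 2]]) (auto simp: A_def)
    have Bf: "B \<in> fmeasurable lborel" using Bsub Bs by (intro fmeasurableI2[OF Icc_fmeas[of c 2]]) auto
    have "measure lborel (A \<union> B) = measure lborel A + measure lborel B"
      using Af Bf dis by (intro measure_Union) (auto simp: fmeasurable_def)
    moreover have "measure lborel (A \<union> B) \<le> measure lborel {c..2}"
      using Bsub As Bs by (intro measure_mono_fmeasurable Icc_fmeas) (auto simp: A_def)
    ultimately show False using mA mV mB k1 k2 c by simp
  qed
  then obtain v where v: "v \<in> A" "v \<in> B" by blast
  have h1: "\<bar>h (x n + v) - h (x n)\<bar> < \<epsilon>/2" using v(1) unfolding A_def U_def n_def by auto
  have h2: "\<bar>h (y n + (- c + v)) - h (y n)\<bar> < \<epsilon>/2"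
    using v(2) unfolding B_def V'_def V_def n_def by auto
  have e: "y n + (- c + v) = x n + v" unfolding y_def c_def by simp
  from h2 have "\<bar>h (x n + v) - h (y n)\<bar> < \<epsilon>/2" unfolding e .
  with h1 have "\<bar>h (y n) - h (x n)\<bar> < \<epsilon>" by linarith
  then show False using P'(4)[of n] by simp
qed

lemma sv_pos: "slowly_varying L \<Longrightarrow> \<exists>A. \<forall>x\<ge>A. L x > 0"
  unfolding slowly_varying_def by blast

lemma sv_lim: "slowly_varying L \<Longrightarrow> c > 0 \<Longrightarrow> ((\<lambda>x. L (c * x) / L x) \<longlongrightarrow> 1) at_top"
  unfolding slowly_varying_def by blast

lemma sv_uct:
  assumes sv: "slowly_varying L" and \<epsilon>: "\<epsilon> > 0"
  shows "\<exists>Y>0. \<forall>z\<ge>Y. L z > 0 \<and> (\<forall>c. 1 \<le> c \<and> c \<le> 2 \<longrightarrow> \<bar>L (c * z) / L z - 1\<bar> < \<epsilon>)"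
proof -
  obtain A where Apos: "\<And>x. x \<ge> A \<Longrightarrow> L x > 0"
    and Ameas: "(\<lambda>x. if A \<le> x then L x else 0) \<in> borel_measurable borel"
    using sv unfolding slowly_varying_def by blast
  define Lc where "Lc x = (if A \<le> x then L x else 0)" for x
  have [measurable]: "Lc \<in> borel_measurable borel" using Ameas unfolding Lc_def .
  define h where "h x = ln (Lc (exp x))" for x
  have hm: "h \<in> borel_measurable borel" unfolding h_def by measurable
  define A1 where "A1 = max A 1"
  have hL: "h x = ln (L (exp x))" if "x \<ge> ln A1" for x
  proof -
    have A1p: "A1 > 0" unfolding A1_def by simp
    have "exp (ln A1) \<le> exp x" using that by simp
    then have "exp x \<ge> A1" using A1p by simp
    then show ?thesis unfolding h_def Lc_def A1_def by simp
  qed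
  have pw: "((\<lambda>x. h (x + u) - h x) \<longlongrightarrow> 0) at_top" if "0 \<le> u" "u \<le> 2" for u
  proof -
    have "((\<lambda>y. L (exp u * y) / L y) \<longlongrightarrow> 1) at_top" by (rule sv_lim[OF sv]) simp
    then have "((\<lambda>x. L (exp u * exp x) / L (exp x)) \<longlongrightarrow> 1) at_top"
      by (rule filterlim_compose[OF _ exp_at_top])
    then have "((\<lambda>x. ln (L (exp u * exp x) / L (exp x))) \<longlongrightarrow> ln 1) at_top"
      by (intro tendsto_ln) auto
    moreover have "eventually (\<lambda>x. ln (L (exp u * exp x) / L (exp x)) = h (x + u) - h x) at_top"
      using eventually_ge_at_top[of "ln A1"]
    proof eventually_elim
      case (elim x)
      have A1p: "A1 > 0" unfolding A1_def by simp
      have "exp (ln A1) \<le> exp x" using elim by simp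
      then have ex: "exp x \<ge> A1" using A1p by simp
      have ge: "exp u * exp x \<ge> exp x" using that by simp
      have g2: "A \<le> exp u * exp x" "A \<le> exp x" using ex ge unfolding A1_def by linarith+
      have p: "L (exp x) > 0" "L (exp u * exp x) > 0"
        using Apos[OF g2(2)] Apos[OF g2(1)] by auto
      have "h (x + u) = ln (L (exp u * exp x))" using hL[of "x+u"] elim that by (simp add: exp_add mult.commute)
      moreover have "h x = ln (L (exp x))" using hL elim by simp
      ultimately show ?case using p by (simp add: ln_div)
    qed
    ultimately show ?thesis by (simp add: tendsto_cong)
  qed
  have "ln (1 + \<epsilon>) > 0" using \<epsilon> by simp
  from uct_additive[OF hm pw this] obtain X where
    X: "\<And>x u. x \<ge> X \<Longrightarrow> 0 \<le> u \<Longrightarrow> u \<le> 1 \<Longrightarrow> \<bar>h (x + u) - h x\<bar> < ln (1 + \<epsilon>)" by blast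
  define Y where "Y = max A1 (exp X)"
  show ?thesis
  proof (intro exI[of _ Y] conjI allI impI)
    show "Y > 0" unfolding Y_def by (simp add: less_max_iff_disj)
    fix z assume z: "z \<ge> Y"
    have zA: "z \<ge> A1" "z \<ge> exp X" using z unfolding Y_def by auto
    have zpos: "z > 0" using zA(1) unfolding A1_def by simp
    show "L z > 0" using zA Apos unfolding A1_def by simp
    fix c :: real assume l: "1 \<le> c \<and> c \<le> 2"
    define x where "x = ln z"
    define u where "u = ln c"
    have x: "x \<ge> X" "x \<ge> ln A1" unfolding x_def using zA zpos unfolding A1_def
      by (auto simp: ln_ge_iff)
    have u: "0 \<le> u" "u \<le> 1" unfolding u_def using l ln_2_less_1
      by (auto intro: order_trans[OF ln_mono[of c 2]])
    have e1: "exp (x + u) = c * z" unfolding x_def u_def using l zpos by (simp add: exp_add)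
    have e2: "exp x = z" unfolding x_def using zpos by simp
    have zc: "z \<le> c * z" using l zpos by simp
    have Az: "A \<le> z" using zA(1) unfolding A1_def by simp
    then have "A \<le> c * z" using zc by linarith
    then have p: "L z > 0" "L (c * z) > 0" using Apos Az by auto
    have "\<bar>ln (L (c * z)) - ln (L z)\<bar> < ln (1 + \<epsilon>)"
      using X[OF x(1) u] hL[of "x + u"] hL[OF x(2)] x(2) u unfolding e1 e2 by simp
    then have lr: "\<bar>ln (L (c * z) / L z)\<bar> < ln (1 + \<epsilon>)" using p by (simp add: ln_div)
    define r where "r = L (c * z) / L z"
    have rpos: "r > 0" unfolding r_def using p by simp
    have "ln r < ln (1 + \<epsilon>)" using lr unfolding r_def[symmetric] by simp
    then have r1: "r < 1 + \<epsilon>" using rpos \<epsilon> by simp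
    have "- ln r < ln (1 + \<epsilon>)" using lr unfolding r_def[symmetric] by simp
    then have "ln (inverse r) < ln (1 + \<epsilon>)" using rpos by (simp add: ln_inverse)
    then have "inverse r < 1 + \<epsilon>" using rpos \<epsilon> by simp
    then have "1 < r * (1 + \<epsilon>)" using rpos by (simp add: field_simps)
    have "1 - \<epsilon> < r"
    proof (rule ccontr)
      assume "\<not> 1 - \<epsilon> < r"
      then have "r * (1 + \<epsilon>) \<le> (1 - \<epsilon>) * (1 + \<epsilon>)" using \<epsilon> by (intro mult_right_mono) auto
      also have "\<dots> = 1 - \<epsilon>^2" by (simp add: algebra_simps power2_eq_square)
      also have "\<dots> \<le> 1" by simp
      finally show False using \<open>1 < r * (1 + \<epsilon>)\<close> by simp
    qed
    with r1 show "\<bar>L (c * z) / L z - 1\<bar> < \<epsilon>" unfolding r_def by simp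
  qed
qed


lemma tendsto_from_bounds:
  fixes r :: "nat \<Rightarrow> real" and lo hi :: "real \<Rightarrow> real"
  assumes lo: "(lo \<longlongrightarrow> 1) (at_right 0)" and hi: "(hi \<longlongrightarrow> 1) (at_right 0)"
    and e0: "e0 > 0"
    and bnd: "\<And>\<epsilon>. 0 < \<epsilon> \<Longrightarrow> \<epsilon> < e0 \<Longrightarrow> eventually (\<lambda>n. lo \<epsilon> \<le> r n \<and> r n \<le> hi \<epsilon>) sequentially"
  shows "r \<longlonglongrightarrow> 1"
proof (rule order_tendstoI)
  have ev: "eventually (\<lambda>\<epsilon>. 0 < \<epsilon> \<and> \<epsilon> < e0) (at_right (0::real))"
    using e0 by (simp add: eventually_at_right_field) (metis)
  fix y :: real
  {
    assume "y < 1"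
    then have "eventually (\<lambda>\<epsilon>. y < lo \<epsilon>) (at_right 0)" by (rule order_tendstoD(1)[OF lo])
    with ev have "eventually (\<lambda>\<epsilon>. y < lo \<epsilon> \<and> 0 < \<epsilon> \<and> \<epsilon> < e0) (at_right (0::real))"
      by eventually_elim auto
    then obtain \<epsilon> where "y < lo \<epsilon>" "0 < \<epsilon>" "\<epsilon> < e0"
      using eventually_happens[of _ "at_right (0::real)"] by auto
    with bnd[of \<epsilon>] show "eventually (\<lambda>n. y < r n) sequentially"
      by (auto elim: eventually_mono)
  }
  {
    assume "y > 1"
    then have "eventually (\<lambda>\<epsilon>. hi \<epsilon> < y) (at_right 0)" by (rule order_tendstoD(2)[OF hi])
    with ev have "eventually (\<lambda>\<epsilon>. hi \<epsilon> < y \<and> 0 < \<epsilon> \<and> \<epsilon> < e0) (at_right (0::real))"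
      by eventually_elim auto
    then obtain \<epsilon> where "hi \<epsilon> < y" "0 < \<epsilon>" "\<epsilon> < e0"
      using eventually_happens[of _ "at_right (0::real)"] by auto
    with bnd[of \<epsilon>] show "eventually (\<lambda>n. r n < y) sequentially"
      by (auto elim: eventually_mono)
  }
qed

lemma iter_asymp:
  fixes S G :: "nat \<Rightarrow> real" and q :: real
  assumes S0: "\<And>n. S n \<ge> 0" and Slim: "S \<longlonglongrightarrow> 0"
    and Gpos: "eventually (\<lambda>n. G n > 0) sequentially"
    and beta: "(\<lambda>n. (S n - S (n^2)) / G n) \<longlonglongrightarrow> 1 - q"
    and ratio: "(\<lambda>n. G (n^2) / G n) \<longlonglongrightarrow> q"
    and q: "0 < q" "q < 1"
  shows "(\<lambda>n. S n / G n) \<longlonglongrightarrow> 1"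
proof -
  define C where "C \<epsilon> = (1 - q) * (1 + \<epsilon>) / (1 - q * (1 + \<epsilon>))" for \<epsilon>
  define c where "c \<epsilon> = (1 - q) * (1 - \<epsilon>) / (1 - q * (1 - \<epsilon>))" for \<epsilon>
  define e0 where "e0 = min 1 ((1 - q) / (2 * q))"
  have e0: "e0 > 0" unfolding e0_def using q by simp
  show ?thesis
  proof (rule tendsto_from_bounds[of c C e0])
    show "(c \<longlongrightarrow> 1) (at_right 0)" unfolding c_def using q
      by (intro tendsto_eq_intros) (auto intro!: tendsto_eq_intros)
    show "(C \<longlongrightarrow> 1) (at_right 0)" unfolding C_def using q
      by (intro tendsto_eq_intros) (auto intro!: tendsto_eq_intros)
    show "e0 > 0" by (rule e0)
  next
    fix \<epsilon> :: real assume \<epsilon>: "0 < \<epsilon>" "\<epsilon> < e0"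
    have \<epsilon>1: "\<epsilon> < 1" using \<epsilon> unfolding e0_def by simp
    have qe: "q * \<epsilon> < (1 - q) / 2"
    proof -
      have "\<epsilon> < (1 - q) / (2 * q)" using \<epsilon> unfolding e0_def by simp
      then have "q * \<epsilon> < q * ((1 - q) / (2 * q))" by (rule mult_strict_left_mono) (use q in auto)
      also have "\<dots> = (1 - q) / 2" using q by (simp add: field_simps)
      finally show ?thesis .
    qed
    define P where "P = q * (1 + \<epsilon>)"
    define p where "p = q * (1 - \<epsilon>)"
    have P1: "0 < P" unfolding P_def using q \<epsilon> by (simp add: zero_less_mult_iff)
    have "P = q + q * \<epsilon>" unfolding P_def by (simp add: distrib_left)
    then have P2: "P < 1" using qe q by (simp add: field_simps)
    note P = P1 P2
    have p1: "0 < p" unfolding p_def using q \<epsilon>1 by (simp add: zero_less_mult_iff)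
    have "p = q - q * \<epsilon>" "q * \<epsilon> > 0" unfolding p_def using q \<epsilon> by (simp_all add: algebra_simps)
    then have p2: "p < 1" using q by linarith
    note p = p1 p2
    have e1: "eventually (\<lambda>n. (1 - q) * (1 - \<epsilon>) \<le> (S n - S (n^2)) / G n \<and> (S n - S (n^2)) / G n \<le> (1 - q) * (1 + \<epsilon>)) sequentially"
    proof -
      have "(1 - q) * (1 - \<epsilon>) < 1 - q" "1 - q < (1 - q) * (1 + \<epsilon>)" using q \<epsilon> by auto
      from order_tendstoD(1)[OF beta this(1)] order_tendstoD(2)[OF beta this(2)]
      show ?thesis by eventually_elim auto
    qed
    have e2: "eventually (\<lambda>n. p \<le> G (n^2) / G n \<and> G (n^2) / G n \<le> P) sequentially"
    proof -
      have "p < q" "q < P" unfolding p_def P_def using q \<epsilon> by auto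
      from order_tendstoD(1)[OF ratio this(1)] order_tendstoD(2)[OF ratio this(2)]
      show ?thesis by eventually_elim auto
    qed
    from e1 e2 Gpos obtain N where N: "\<And>n. n \<ge> N \<Longrightarrow>
        ((1 - q) * (1 - \<epsilon>) \<le> (S n - S (n^2)) / G n \<and> (S n - S (n^2)) / G n \<le> (1 - q) * (1 + \<epsilon>)) \<and>
        (p \<le> G (n^2) / G n \<and> G (n^2) / G n \<le> P) \<and> G n > 0"
      unfolding eventually_sequentially by (metis (no_types, lifting) eventually_sequentially eventually_conj_iff)
    define N' where "N' = max N 2"
    have N': "\<And>n. n \<ge> N' \<Longrightarrow>
        (1 - q) * (1 - \<epsilon>) * G n \<le> S n - S (n^2) \<and> S n - S (n^2) \<le> (1 - q) * (1 + \<epsilon>) * G n \<and>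
        p * G n \<le> G (n^2) \<and> G (n^2) \<le> P * G n \<and> G n > 0"
    proof -
      fix n assume "n \<ge> N'"
      then have "n \<ge> N" unfolding N'_def by simp
      from N[OF this] show "?thesis n" by (auto simp: field_simps)
    qed
    have sq: "n^2 \<ge> n" for n :: nat by (simp add: power2_eq_square)
    have sqN: "n \<ge> N' \<Longrightarrow> n^2 \<ge> N'" for n using sq[of n] by linarith
    have pw: "(n^2)^(2^J) = n^(2^Suc J)" for n J :: nat by (simp add: power_mult[symmetric] mult.commute)
    have CP: "(1 - q) * (1 + \<epsilon>) + C \<epsilon> * P = C \<epsilon>"
      unfolding C_def P_def[symmetric] using P by (simp add: field_simps)
    have C0: "C \<epsilon> \<ge> 0" unfolding C_def P_def[symmetric] using P q \<epsilon> by (intro divide_nonneg_pos mult_nonneg_nonneg) auto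
    have up: "\<forall>n\<ge>N'. S n \<le> C \<epsilon> * G n + S (n^(2^J))" for J
    proof (induction J)
      case 0
      show ?case
      proof (intro allI impI)
        fix n assume "n \<ge> N'"
        then have "G n > 0" using N' by blast
        then show "S n \<le> C \<epsilon> * G n + S (n^(2^0))" using C0 by simp
      qed
    next
      case (Suc J)
      show ?case
      proof (intro allI impI)
        fix n assume n: "n \<ge> N'"
        have "S n = (S n - S (n^2)) + S (n^2)" by simp
        also have "\<dots> \<le> (1 - q) * (1 + \<epsilon>) * G n + (C \<epsilon> * G (n^2) + S ((n^2)^(2^J)))"
          using N'[OF n] Suc[rule_format, OF sqN[OF n]] by linarith
        also have "C \<epsilon> * G (n^2) \<le> C \<epsilon> * (P * G n)" using N'[OF n] C0 by (intro mult_left_mono) auto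
        then have "(1 - q) * (1 + \<epsilon>) * G n + (C \<epsilon> * G (n^2) + S ((n^2)^(2^J))) \<le>
            ((1 - q) * (1 + \<epsilon>) + C \<epsilon> * P) * G n + S (n^(2^Suc J))"
          unfolding pw by (simp add: algebra_simps)
        finally show "S n \<le> C \<epsilon> * G n + S (n^(2^Suc J))" unfolding CP .
      qed
    qed
    have cp: "(1 - q) * (1 - \<epsilon>) = c \<epsilon> * (1 - p)"
      unfolding c_def p_def[symmetric] using p by (simp add: field_simps)
    have c0: "c \<epsilon> \<ge> 0" unfolding c_def p_def[symmetric] using p q \<epsilon>1 by simp
    have lo: "\<forall>n\<ge>N'. c \<epsilon> * (1 - p^J) * G n \<le> S n" for J
    proof (induction J)
      case 0 then show ?case using S0 by simp
    next
      case (Suc J)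
      show ?case
      proof (intro allI impI)
        fix n assume n: "n \<ge> N'"
        have pJ: "c \<epsilon> * (1 - p^J) \<ge> 0" using c0 p by (simp add: power_le_one)
        have "c \<epsilon> * (1 - p^Suc J) * G n = (1 - q) * (1 - \<epsilon>) * G n + c \<epsilon> * (1 - p^J) * (p * G n)"
          unfolding cp by (simp add: algebra_simps)
        also have "\<dots> \<le> (S n - S (n^2)) + c \<epsilon> * (1 - p^J) * G (n^2)"
          using N'[OF n] pJ by (intro add_mono mult_left_mono) auto
        also have "\<dots> \<le> (S n - S (n^2)) + S (n^2)"
          using Suc[rule_format, OF sqN[OF n]] by simp
        finally show "c \<epsilon> * (1 - p^Suc J) * G n \<le> S n" by simp
      qed
    qed
    show "eventually (\<lambda>n. c \<epsilon> \<le> S n / G n \<and> S n / G n \<le> C \<epsilon>) sequentially"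
      unfolding eventually_sequentially
    proof (intro exI[of _ N'] allI impI)
      fix n assume n: "n \<ge> N'"
      have Gp: "G n > 0" using N'[OF n] by simp
      have n2: "n \<ge> 2" using n unfolding N'_def by simp
      have lim1: "(\<lambda>J. C \<epsilon> * G n + S (n^(2^J))) \<longlonglongrightarrow> C \<epsilon> * G n + 0"
      proof (intro tendsto_intros filterlim_compose[OF Slim])
        show "filterlim (\<lambda>J. n^(2^J)) sequentially sequentially"
        proof (rule filterlim_at_top_mono[OF filterlim_ident], intro always_eventually allI)
          fix J :: nat
          have "J < 2^J" by (rule less_exp)
          also have "(2::nat)^J \<le> 2^(2^J)" using less_exp[of J] by (intro power_increasing) auto
          also have "(2::nat)^(2^J) \<le> n^(2^J)" using n2 by (intro power_mono) auto
          finally show "J \<le> n^(2^J)" by simp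
        qed
      qed
      have "S n \<le> C \<epsilon> * G n"
        using LIMSEQ_le_const[OF lim1, of "S n"] up n by simp
      moreover have lim2: "(\<lambda>J. c \<epsilon> * (1 - p^J) * G n) \<longlonglongrightarrow> c \<epsilon> * (1 - 0) * G n"
        using p by (intro tendsto_intros LIMSEQ_power_zero) auto
      have "c \<epsilon> * G n \<le> S n"
        using LIMSEQ_le_const2[OF lim2, of "S n"] lo n by simp
      ultimately show "c \<epsilon> \<le> S n / G n \<and> S n / G n \<le> C \<epsilon>" using Gp by (simp add: field_simps)
    qed
  qed
qed


lemma block_ratio:
  fixes c d :: "nat \<Rightarrow> nat \<Rightarrow> real" and B :: "nat \<Rightarrow> nat set"
  assumes fin: "\<And>n. finite (B n)" and ne: "eventually (\<lambda>n. B n \<noteq> {}) sequentially"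
    and close: "\<And>\<epsilon>. \<epsilon> > 0 \<Longrightarrow> eventually (\<lambda>n. \<forall>k\<in>B n. d n k > 0 \<and> \<bar>c n k - d n k\<bar> \<le> \<epsilon> * d n k) sequentially"
  shows "(\<lambda>n. (\<Sum>k\<in>B n. c n k) / (\<Sum>k\<in>B n. d n k)) \<longlonglongrightarrow> 1"
  unfolding tendsto_iff dist_real_def
proof (intro allI impI)
  fix e :: real assume e: "e > 0"
  have e2: "e/2 > 0" using e by simp
  from close[OF e2] ne show "eventually (\<lambda>n. \<bar>(\<Sum>k\<in>B n. c n k) / (\<Sum>k\<in>B n. d n k) - 1\<bar> < e) sequentially"
  proof eventually_elim
    case (elim n)
    have Sd: "(\<Sum>k\<in>B n. d n k) > 0" using elim fin by (intro sum_pos) auto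
    have "\<bar>(\<Sum>k\<in>B n. c n k) - (\<Sum>k\<in>B n. d n k)\<bar> = \<bar>\<Sum>k\<in>B n. c n k - d n k\<bar>"
      by (simp add: sum_subtractf)
    also have "\<dots> \<le> (\<Sum>k\<in>B n. \<bar>c n k - d n k\<bar>)" by (rule sum_abs)
    also have "\<dots> \<le> (\<Sum>k\<in>B n. e/2 * d n k)" using elim by (intro sum_mono) auto
    also have "\<dots> = e/2 * (\<Sum>k\<in>B n. d n k)" by (simp add: sum_distrib_left)
    finally have "\<bar>(\<Sum>k\<in>B n. c n k) - (\<Sum>k\<in>B n. d n k)\<bar> \<le> e/2 * (\<Sum>k\<in>B n. d n k)" .
    then have "\<bar>(\<Sum>k\<in>B n. c n k) / (\<Sum>k\<in>B n. d n k) - 1\<bar> \<le> e/2"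
      using Sd by (simp add: abs_le_iff field_simps)
    then show ?case using e by simp
  qed
qed

lemma sv_ratio_lim:
  assumes sv: "slowly_varying L" and u: "filterlim u at_top F" and v: "((\<lambda>x. v x / u x) \<longlongrightarrow> 1) F"
  shows "((\<lambda>x. L (v x) / L (u x)) \<longlongrightarrow> 1) F"
  unfolding tendsto_iff dist_real_def
proof (intro allI impI)
  fix e :: real assume e: "e > 0"
  define \<epsilon> where "\<epsilon> = min (e/2) (1/2)"
  have \<epsilon>: "\<epsilon> > 0" "\<epsilon> \<le> e/2" "\<epsilon> \<le> 1/2" unfolding \<epsilon>_def using e by auto
  obtain Y where Y: "Y > 0" "\<And>z. z \<ge> Y \<Longrightarrow> L z > 0 \<and> (\<forall>c. 1 \<le> c \<and> c \<le> 2 \<longrightarrow> \<bar>L (c * z) / L z - 1\<bar> < \<epsilon>)"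
    using sv_uct[OF sv \<epsilon>(1)] by blast
  have ev1: "eventually (\<lambda>x. u x \<ge> 2 * Y) F" using u by (simp add: filterlim_at_top)
  have ev2: "eventually (\<lambda>x. 1/2 < v x / u x \<and> v x / u x < 3/2) F"
    using order_tendstoD(1)[OF v, of "1/2"] order_tendstoD(2)[OF v, of "3/2"] by (auto elim: eventually_elim2)
  from ev1 ev2 show "eventually (\<lambda>x. \<bar>L (v x) / L (u x) - 1\<bar> < e) F"
  proof eventually_elim
    case (elim x)
    have upos: "u x > 0" using elim Y by linarith
    have vu: "u x / 2 < v x" "v x < 3/2 * u x" using elim upos by (auto simp: field_simps)
    have vpos: "v x > 0" using vu upos by linarith
    have vY: "v x \<ge> Y" using vu elim by linarith
    have uY: "u x \<ge> Y" using elim Y by linarith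
    show ?case
    proof (cases "v x \<ge> u x")
      case True
      have "1 \<le> v x / u x" "v x / u x \<le> 2" using True upos vu by (auto simp: field_simps)
      then have "\<bar>L (v x / u x * u x) / L (u x) - 1\<bar> < \<epsilon>" using Y(2)[OF uY] by blast
      then show ?thesis using upos \<epsilon> by simp
    next
      case False
      have "1 \<le> u x / v x" "u x / v x \<le> 2" using False vpos vu by (auto simp: field_simps)
      then have h: "\<bar>L (u x / v x * v x) / L (v x) - 1\<bar> < \<epsilon>" using Y(2)[OF vY] by blast
      have Lp: "L (u x) > 0" "L (v x) > 0" using Y(2)[OF uY] Y(2)[OF vY] by auto
      define r where "r = L (u x) / L (v x)"
      have r: "\<bar>r - 1\<bar> < \<epsilon>" using h vpos unfolding r_def by simp
      have rpos: "r > 1/2" using r \<epsilon> by linarith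
      have "L (v x) / L (u x) - 1 = (1 - r) / r" unfolding r_def using Lp by (simp add: field_simps)
      then have "\<bar>L (v x) / L (u x) - 1\<bar> = \<bar>1 - r\<bar> / r" using rpos by simp
      also have "\<dots> \<le> \<bar>1 - r\<bar> / (1/2)" using rpos by (intro divide_left_mono) auto
      also have "\<dots> < \<epsilon> / (1/2)" using r by (intro divide_strict_right_mono) auto
      finally show ?thesis using \<epsilon> by simp
    qed
  qed
qed

definition ff :: "real \<Rightarrow> real \<Rightarrow> real" where "ff \<gamma> x = 1 / (x * ln x powr (1 + \<gamma>))"
definition FF :: "real \<Rightarrow> real \<Rightarrow> real" where "FF \<gamma> x = ln x powr (- \<gamma>) / \<gamma>"

lemma FF_deriv:
  assumes "\<gamma> > 0" "x > 1"
  shows "(FF \<gamma> has_real_derivative - ff \<gamma> x) (at x)"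
proof -
  have e: "ln x powr (- \<gamma> - 1) / x = 1 / (x * ln x powr (1 + \<gamma>))"
  proof -
    have "ln x powr (- \<gamma> - 1) = ln x powr (- (1 + \<gamma>))"
      by (rule arg_cong[where f="\<lambda>a. ln x powr a"]) simp
    also have "\<dots> = inverse (ln x powr (1 + \<gamma>))" by (rule powr_minus)
    finally have "ln x powr (- \<gamma> - 1) = inverse (ln x powr (1 + \<gamma>))" .
    then show ?thesis by (simp add: field_simps)
  qed
  show ?thesis unfolding FF_def ff_def
    by (insert assms, (rule derivative_eq_intros refl | simp add: e)+)
qed

lemma ff_antimono:
  assumes "\<gamma> > 0" "1 < x" "x \<le> y"
  shows "ff \<gamma> y \<le> ff \<gamma> x"
proof -
  have "ln x powr (1 + \<gamma>) \<le> ln y powr (1 + \<gamma>)" using assms by (intro powr_mono2) auto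
  moreover have "ln x powr (1 + \<gamma>) > 0" using assms by simp
  ultimately have "x * ln x powr (1 + \<gamma>) \<le> y * ln y powr (1 + \<gamma>)" using assms
    by (intro mult_mono) auto
  moreover have "x * ln x powr (1 + \<gamma>) > 0" using assms by simp
  ultimately show ?thesis unfolding ff_def by (intro divide_left_mono) auto
qed

lemma ff_le_FF:
  assumes "\<gamma> > 0" "x > 2"
  shows "ff \<gamma> x \<le> FF \<gamma> (x - 1) - FF \<gamma> x"
proof -
  obtain z where z: "x - 1 < z" "z < x" "FF \<gamma> x - FF \<gamma> (x - 1) = (x - (x - 1)) * (- ff \<gamma> z)"
    using MVT2[of "x - 1" x "FF \<gamma>" "\<lambda>z. - ff \<gamma> z"] FF_deriv[OF assms(1)] assms by force
  have "ff \<gamma> x \<le> ff \<gamma> z" using z assms by (intro ff_antimono) auto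
  then show ?thesis using z by simp
qed

lemma FF_le_ff:
  assumes "\<gamma> > 0" "x > 1"
  shows "FF \<gamma> x - FF \<gamma> (x + 1) \<le> ff \<gamma> x"
proof -
  obtain z where z: "x < z" "z < x + 1" "FF \<gamma> (x + 1) - FF \<gamma> x = (x + 1 - x) * (- ff \<gamma> z)"
    using MVT2[of x "x + 1" "FF \<gamma>" "\<lambda>z. - ff \<gamma> z"] FF_deriv[OF assms(1)] assms by force
  have "ff \<gamma> z \<le> ff \<gamma> x" using z assms by (intro ff_antimono) auto
  then show ?thesis using z by simp
qed

lemma tele1:
  fixes g :: "nat \<Rightarrow> real"
  shows "n \<le> m \<Longrightarrow> (\<Sum>k\<in>{n<..m}. g (k - 1) - g k) = g n - g m"
proof (induction m)
  case (Suc m)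
  show ?case
  proof (cases "n = Suc m")
    case False
    then have "n \<le> m" using Suc by simp
    moreover have "{n<..Suc m} = insert (Suc m) {n<..m}" using \<open>n \<le> m\<close> by auto
    ultimately show ?thesis using Suc by simp
  qed simp
qed simp

lemma tele2:
  fixes g :: "nat \<Rightarrow> real"
  shows "n \<le> m \<Longrightarrow> (\<Sum>k\<in>{n<..m}. g k - g (Suc k)) = g (Suc n) - g (Suc m)"
proof (induction m)
  case (Suc m)
  show ?case
  proof (cases "n = Suc m")
    case False
    then have "n \<le> m" using Suc by simp
    moreover have "{n<..Suc m} = insert (Suc m) {n<..m}" using \<open>n \<le> m\<close> by auto
    ultimately show ?thesis using Suc by simp
  qed simp
qed simp

lemma gam_cancel: "(g::real) \<noteq> 0 \<Longrightarrow> g * A * (B / g - C / g) = A * (B - C)"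
  by (simp add: field_simps)

lemma ff_block_lim:
  assumes "\<gamma> > 0"
  shows "(\<lambda>n. \<gamma> * ln (real n) powr \<gamma> * (\<Sum>k\<in>{n<..n^2}. ff \<gamma> (real k))) \<longlonglongrightarrow> 1 - 2 powr (- \<gamma>)"
proof (rule tendsto_sandwich)
  have bnd: "FF \<gamma> (real n + 1) - FF \<gamma> (real (n^2) + 1) \<le> (\<Sum>k\<in>{n<..n^2}. ff \<gamma> (real k))
           \<and> (\<Sum>k\<in>{n<..n^2}. ff \<gamma> (real k)) \<le> FF \<gamma> (real n) - FF \<gamma> (real (n^2))" if n: "n \<ge> 2" for n
  proof
    have nn: "n \<le> n^2" by (simp add: power2_eq_square)
    have "(\<Sum>k\<in>{n<..n^2}. FF \<gamma> (real k) - FF \<gamma> (real (Suc k))) \<le> (\<Sum>k\<in>{n<..n^2}. ff \<gamma> (real k))"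
    proof (intro sum_mono)
      fix k assume k: "k \<in> {n<..n^2}"
      then have "real k > 1" using n by auto
      from FF_le_ff[OF assms this] show "FF \<gamma> (real k) - FF \<gamma> (real (Suc k)) \<le> ff \<gamma> (real k)"
        by (simp add: add.commute)
    qed
    moreover have "(\<Sum>k\<in>{n<..n^2}. FF \<gamma> (real k) - FF \<gamma> (real (Suc k))) = FF \<gamma> (real n + 1) - FF \<gamma> (real (n^2) + 1)"
      using tele2[OF nn, of "\<lambda>k. FF \<gamma> (real k)"] by (simp add: add.commute)
    ultimately show "FF \<gamma> (real n + 1) - FF \<gamma> (real (n^2) + 1) \<le> (\<Sum>k\<in>{n<..n^2}. ff \<gamma> (real k))" by simp
    have "(\<Sum>k\<in>{n<..n^2}. ff \<gamma> (real k)) \<le> (\<Sum>k\<in>{n<..n^2}. FF \<gamma> (real (k - 1)) - FF \<gamma> (real k))"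
    proof (intro sum_mono)
      fix k assume k: "k \<in> {n<..n^2}"
      then have "real k > 2" using n by auto
      then have "ff \<gamma> (real k) \<le> FF \<gamma> (real k - 1) - FF \<gamma> (real k)" by (rule ff_le_FF[OF assms])
      moreover have "real (k - 1) = real k - 1" using k n by auto
      ultimately show "ff \<gamma> (real k) \<le> FF \<gamma> (real (k - 1)) - FF \<gamma> (real k)" by simp
    qed
    also have "\<dots> = FF \<gamma> (real n) - FF \<gamma> (real (n^2))"
      using tele1[OF nn, of "\<lambda>k. FF \<gamma> (real k)"] by simp
    finally show "(\<Sum>k\<in>{n<..n^2}. ff \<gamma> (real k)) \<le> FF \<gamma> (real n) - FF \<gamma> (real (n^2))" .
  qed
  have gp: "\<gamma> * ln (real n) powr \<gamma> \<ge> 0" for n using assms by simp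
  show "eventually (\<lambda>n. \<gamma> * ln (real n) powr \<gamma> * (FF \<gamma> (real n + 1) - FF \<gamma> (real (n^2) + 1))
      \<le> \<gamma> * ln (real n) powr \<gamma> * (\<Sum>k\<in>{n<..n^2}. ff \<gamma> (real k))) sequentially"
    using eventually_ge_at_top[of 2] by eventually_elim (use bnd gp in \<open>auto intro!: mult_left_mono\<close>)
  show "eventually (\<lambda>n. \<gamma> * ln (real n) powr \<gamma> * (\<Sum>k\<in>{n<..n^2}. ff \<gamma> (real k))
      \<le> \<gamma> * ln (real n) powr \<gamma> * (FF \<gamma> (real n) - FF \<gamma> (real (n^2)))) sequentially"
    using eventually_ge_at_top[of 2] by eventually_elim (use bnd gp in \<open>auto intro!: mult_left_mono\<close>)
  have "(\<lambda>n::nat. ln (real n) powr \<gamma> * (ln (real n + 1) powr -\<gamma> - ln (real n^2+1) powr -\<gamma>)) \<longlonglongrightarrow> 1 - 2 powr -\<gamma>"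
    using assms by real_asymp
  then show "(\<lambda>n. \<gamma> * ln (real n) powr \<gamma> * (FF \<gamma> (real n + 1) - FF \<gamma> (real (n^2) + 1))) \<longlonglongrightarrow> 1 - 2 powr (- \<gamma>)"
    unfolding FF_def using assms by (simp only: gam_cancel of_nat_power)
  have "(\<lambda>n::nat. ln (real n) powr \<gamma> * (ln (real n) powr -\<gamma> - ln (real n^2) powr -\<gamma>)) \<longlonglongrightarrow> 1 - 2 powr -\<gamma>"
    using assms by real_asymp
  then show "(\<lambda>n. \<gamma> * ln (real n) powr \<gamma> * (FF \<gamma> (real n) - FF \<gamma> (real (n^2)))) \<longlonglongrightarrow> 1 - 2 powr (- \<gamma>)"
    unfolding FF_def using assms by (simp only: gam_cancel of_nat_power)
qed


context tailseq
begin

lemma part2_asymp: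
  assumes \<gamma>: "\<gamma> > 0" and sv: "slowly_varying L"
    and ab: "(\<lambda>k. a k / (L (ln (real k)) * ff \<gamma> (real k))) \<longlonglongrightarrow> 1"
  shows "(\<lambda>n. St a (real n) / (L (ln (real n)) / (\<gamma> * ln (real n) powr \<gamma>))) \<longlonglongrightarrow> 1"
proof -
  define G where "G n = L (ln (real n)) / (\<gamma> * ln (real n) powr \<gamma>)" for n :: nat
  define b where "b k = L (ln (real k)) * ff \<gamma> (real k)" for k :: nat
  obtain A where A: "\<And>x. x \<ge> A \<Longrightarrow> L x > 0" using sv_pos[OF sv] by blast
  have lnlim: "filterlim (\<lambda>n::nat. ln (real n)) at_top sequentially" by real_asymp
  have "eventually (\<lambda>n::nat. ln (real n) \<ge> A) sequentially" using lnlim by (simp add: filterlim_at_top)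
  then have evL: "eventually (\<lambda>n::nat. L (ln (real n)) > 0) sequentially"
    by eventually_elim (rule A)
  have ev2: "eventually (\<lambda>n::nat. n \<ge> 2) sequentially" by (rule eventually_ge_at_top)
  have Gpos: "eventually (\<lambda>n. G n > 0) sequentially"
    using evL ev2 by eventually_elim (use \<gamma> in \<open>auto simp: G_def\<close>)
  have ffpos: "ff \<gamma> x > 0" if "x > 1" for x using that unfolding ff_def by simp
  have close: "eventually (\<lambda>n. \<forall>k\<in>{n<..n^2}. L (ln (real n)) * ff \<gamma> (real k) > 0 \<and>
      \<bar>a k - L (ln (real n)) * ff \<gamma> (real k)\<bar> \<le> \<epsilon> * (L (ln (real n)) * ff \<gamma> (real k))) sequentially"
    if \<epsilon>: "\<epsilon> > 0" for \<epsilon>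
  proof -
    define \<epsilon>1 where "\<epsilon>1 = min (\<epsilon>/3) 1"
    have \<epsilon>1: "\<epsilon>1 > 0" "\<epsilon>1 \<le> \<epsilon>/3" "\<epsilon>1 \<le> 1" unfolding \<epsilon>1_def using \<epsilon> by auto
    have "eventually (\<lambda>k. \<bar>a k / b k - 1\<bar> < \<epsilon>1) sequentially"
      using ab \<epsilon>1 unfolding b_def tendsto_iff dist_real_def by blast
    moreover have "eventually (\<lambda>k. b k > 0) sequentially"
      using evL ev2 by eventually_elim (auto simp: b_def intro!: ffpos mult_pos_pos)
    ultimately have "eventually (\<lambda>k. b k > 0 \<and> \<bar>a k - b k\<bar> \<le> \<epsilon>1 * b k) sequentially"
    proof eventually_elim
      case (elim k)
      then have "\<bar>(a k - b k) / b k\<bar> < \<epsilon>1" by (simp add: diff_divide_distrib)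
      then show ?case using elim by (simp add: abs_div pos_divide_less_eq less_imp_le)
    qed
    then obtain K where K: "\<And>k. k \<ge> K \<Longrightarrow> b k > 0 \<and> \<bar>a k - b k\<bar> \<le> \<epsilon>1 * b k"
      by (auto simp: eventually_sequentially)
    obtain Y where Y: "Y > 0" "\<And>z. z \<ge> Y \<Longrightarrow> L z > 0 \<and> (\<forall>c. 1 \<le> c \<and> c \<le> 2 \<longrightarrow> \<bar>L (c * z) / L z - 1\<bar> < \<epsilon>1)"
      using sv_uct[OF sv \<epsilon>1(1)] by blast
    have "eventually (\<lambda>n. ln (real n) \<ge> Y) sequentially" using lnlim by (simp add: filterlim_at_top)
    with ev2 eventually_ge_at_top[of K] show ?thesis
    proof eventually_elim
      case (elim n)
      show ?case
      proof
        fix k assume k: "k \<in> {n<..n^2}"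
        have kK: "k \<ge> K" using k elim by auto
        have n1: "real n > 1" using elim by simp
        have lnpos: "ln (real n) > 0" using n1 by simp
        have kn: "real k > real n" using k by simp
        have lnk1: "ln (real k) > ln (real n)" using kn n1 by simp
        have "real k \<le> real n ^ 2" using k by (simp flip: of_nat_power)
        then have "ln (real k) \<le> ln (real n ^ 2)" using kn n1 by simp
        also have "\<dots> = 2 * ln (real n)" using n1 by (simp add: ln_realpow)
        finally have lnk2: "ln (real k) \<le> 2 * ln (real n)" .
        define c where "c = ln (real k) / ln (real n)"
        have c: "1 \<le> c" "c \<le> 2" unfolding c_def using lnpos lnk1 lnk2 by (auto simp: field_simps)
        have cz: "c * ln (real n) = ln (real k)" unfolding c_def using lnpos by simp
        from Y(2)[OF elim(3)] have Ln: "L (ln (real n)) > 0" by blast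
        from Y(2)[OF elim(3)] c have "\<bar>L (c * ln (real n)) / L (ln (real n)) - 1\<bar> < \<epsilon>1" by blast
        then have Lk: "\<bar>L (ln (real k)) / L (ln (real n)) - 1\<bar> < \<epsilon>1" unfolding cz .
        define Ln' where "Ln' = L (ln (real n))"
        define Lk' where "Lk' = L (ln (real k))"
        define f where "f = ff \<gamma> (real k)"
        have fpos: "f > 0" unfolding f_def using kn n1 by (intro ffpos) simp
        have Lkn: "\<bar>Lk' - Ln'\<bar> \<le> \<epsilon>1 * Ln'"
        proof -
          have "\<bar>(Lk' - Ln') / Ln'\<bar> < \<epsilon>1" using Lk Ln unfolding Lk'_def Ln'_def by (simp add: diff_divide_distrib)
          then show ?thesis using Ln unfolding Ln'_def by (simp add: abs_div pos_divide_less_eq less_imp_le)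
        qed
        have bk: "b k = Lk' * f" unfolding b_def Lk'_def f_def by simp
        have ak: "\<bar>a k - Lk' * f\<bar> \<le> \<epsilon>1 * (Lk' * f)" using K[OF kK] unfolding bk by simp
        have "\<bar>Lk' * f - Ln' * f\<bar> = \<bar>Lk' - Ln'\<bar> * f" using fpos by (simp add: left_diff_distrib[symmetric] abs_mult)
        also have "\<dots> \<le> \<epsilon>1 * Ln' * f" using Lkn fpos by (intro mult_right_mono) auto
        finally have d1: "\<bar>Lk' * f - Ln' * f\<bar> \<le> \<epsilon>1 * Ln' * f" .
        have "Lk' \<le> (1 + \<epsilon>1) * Ln'" using Lkn by (simp add: algebra_simps abs_le_iff)
        then have "\<epsilon>1 * (Lk' * f) \<le> \<epsilon>1 * ((1 + \<epsilon>1) * Ln' * f)"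
          using fpos \<epsilon>1 by (intro mult_left_mono mult_right_mono) auto
        also have "\<dots> \<le> \<epsilon>1 * (2 * Ln' * f)"
          using fpos \<epsilon>1 Ln unfolding Ln'_def by (intro mult_left_mono mult_right_mono) auto
        finally have d2: "\<epsilon>1 * (Lk' * f) \<le> 2 * \<epsilon>1 * (Ln' * f)" by simp
        have "\<bar>a k - Ln' * f\<bar> \<le> \<bar>a k - Lk' * f\<bar> + \<bar>Lk' * f - Ln' * f\<bar>" by linarith
        also have "\<dots> \<le> 3 * \<epsilon>1 * (Ln' * f)" using ak d1 d2 by (simp add: algebra_simps)
        also have "\<dots> \<le> \<epsilon> * (Ln' * f)" using \<epsilon>1 fpos Ln unfolding Ln'_def
          by (intro mult_right_mono) auto
        finally show "L (ln (real n)) * ff \<gamma> (real k) > 0 \<and>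
          \<bar>a k - L (ln (real n)) * ff \<gamma> (real k)\<bar> \<le> \<epsilon> * (L (ln (real n)) * ff \<gamma> (real k))"
          using Ln fpos unfolding Ln'_def f_def by simp
      qed
    qed
  qed
  have br: "(\<lambda>n. (\<Sum>k\<in>{n<..n^2}. a k) / (\<Sum>k\<in>{n<..n^2}. L (ln (real n)) * ff \<gamma> (real k))) \<longlonglongrightarrow> 1"
  proof (rule block_ratio)
    show "eventually (\<lambda>n. {n<..n^2} \<noteq> {}) sequentially"
      using ev2
    proof eventually_elim
      case (elim n)
      have "n < n^2" using elim by (simp add: power2_eq_square)
      then show ?case by auto
    qed
  qed (use close in auto)
  have beta: "(\<lambda>n. (St a (real n) - St a (real (n^2))) / G n) \<longlonglongrightarrow> 1 * (1 - 2 powr (- \<gamma>))"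
  proof (rule Lim_transform_eventually[OF tendsto_mult[OF br ff_block_lim[OF \<gamma>]]])
    show "eventually (\<lambda>n. (\<Sum>k\<in>{n<..n^2}. a k) / (\<Sum>k\<in>{n<..n^2}. L (ln (real n)) * ff \<gamma> (real k)) *
        (\<gamma> * ln (real n) powr \<gamma> * (\<Sum>k\<in>{n<..n^2}. ff \<gamma> (real k))) =
        (St a (real n) - St a (real (n^2))) / G n) sequentially"
      using evL ev2
    proof eventually_elim
      case (elim n)
      have nn: "n \<le> n^2" by (simp add: power2_eq_square)
      have "n < n^2" using elim by (simp add: power2_eq_square)
      then have ne: "{n<..n^2} \<noteq> {}" by auto
      have sf: "(\<Sum>k\<in>{n<..n^2}. ff \<gamma> (real k)) > 0"
        using elim ne by (intro sum_pos) (auto intro!: ffpos)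
      have lp: "ln (real n) > 0" using elim by simp
      have "St a (real n) - St a (real (n^2)) = (\<Sum>k\<in>{n<..n^2}. a k)" using St_diff[OF nn] by simp
      then show ?case unfolding G_def using elim sf lp \<gamma>
        by (simp add: sum_distrib_left[symmetric] field_simps)
    qed
  qed
  have ratio: "(\<lambda>n. G (n^2) / G n) \<longlonglongrightarrow> 1 * 2 powr (- \<gamma>)"
  proof (rule Lim_transform_eventually[OF tendsto_mult[OF _ tendsto_const]])
    show "(\<lambda>n. L (2 * ln (real n)) / L (ln (real n))) \<longlonglongrightarrow> 1"
      by (rule filterlim_compose[OF sv_lim[OF sv] lnlim]) simp
    show "eventually (\<lambda>n. L (2 * ln (real n)) / L (ln (real n)) * 2 powr (- \<gamma>) = G (n^2) / G n) sequentially"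
      using evL ev2
    proof eventually_elim
      case (elim n)
      have lp: "ln (real n) > 0" using elim by simp
      have l2: "ln (real (n^2)) = 2 * ln (real n)" using elim by (simp add: ln_realpow)
      have "(2 * ln (real n)) powr \<gamma> = 2 powr \<gamma> * ln (real n) powr \<gamma>" using lp by (simp add: powr_mult)
      then show ?case unfolding G_def l2 using elim lp \<gamma> by (simp add: powr_minus field_simps)
    qed
  qed
  have "(\<lambda>n. St a (real n) / G n) \<longlonglongrightarrow> 1"
  proof (rule iter_asymp[OF St_nonneg St_lim0 Gpos])
    show "(\<lambda>n. (St a (real n) - St a (real (n^2))) / G n) \<longlonglongrightarrow> 1 - 2 powr (- \<gamma>)" using beta by simp
    show "(\<lambda>n. G (n^2) / G n) \<longlonglongrightarrow> 2 powr (- \<gamma>)" using ratio by simp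
    show "0 < 2 powr (- \<gamma>)" by simp
    show "2 powr (- \<gamma>) < 1" using \<gamma> by (simp add: powr_less_one)
  qed
  then show ?thesis unfolding G_def .
qed

lemma part2_ratio:
  assumes \<gamma>: "\<gamma> > 0" and sv: "slowly_varying L" and apos: "eventually (\<lambda>k. a k > 0) sequentially"
    and asy: "(\<lambda>n. St a (real n) / (L (ln (real n)) / (\<gamma> * ln (real n) powr \<gamma>))) \<longlonglongrightarrow> 1"
    and t: "0 < t" "t < 1"
  shows "(\<lambda>n. St a (real n powr t) / St a (real n)) \<longlonglongrightarrow> t powr (- \<gamma>)"
proof -
  define G where "G n = L (ln (real n)) / (\<gamma> * ln (real n) powr \<gamma>)" for n :: nat
  define m where "m n = nat \<lfloor>real n powr t\<rfloor>" for n
  have mlim: "filterlim m sequentially sequentially" unfolding m_def by (rule filterlim_nat_floor_powr[OF t(1)])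
  have Spos: "St a x > 0" for x by (rule St_pos[OF apos])
  obtain A where A: "\<And>x. x \<ge> A \<Longrightarrow> L x > 0" using sv_pos[OF sv] by blast
  have lnlim: "filterlim (\<lambda>n::nat. ln (real n)) at_top sequentially" by real_asymp
  have tlnlim: "filterlim (\<lambda>n::nat. t * ln (real n)) at_top sequentially" using t by real_asymp
  have lnmlim: "filterlim (\<lambda>n. ln (real (m n))) at_top sequentially"
    by (rule filterlim_compose[OF lnlim mlim])
  have h1: "(\<lambda>n. St a (real (m n)) / G (m n)) \<longlonglongrightarrow> 1"
    using filterlim_compose[OF asy mlim] unfolding G_def by simp
  have h2: "(\<lambda>n. St a (real n) / G n) \<longlonglongrightarrow> 1" using asy unfolding G_def .
  have lnm: "(\<lambda>n. ln (real (m n)) / ln (real n)) \<longlonglongrightarrow> t"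
  proof (rule tendsto_sandwich[of "\<lambda>n. ln (real n powr t - 1) / ln (real n)" _ _ "\<lambda>_. t"])
    have ev: "eventually (\<lambda>n::nat. real n powr t \<ge> 2) sequentially" using t by real_asymp
    show "eventually (\<lambda>n. ln (real n powr t - 1) / ln (real n) \<le> ln (real (m n)) / ln (real n)) sequentially"
      using ev eventually_ge_at_top[of 2]
    proof eventually_elim
      case (elim n)
      have "real (m n) \<ge> real n powr t - 1" unfolding m_def by linarith
      then have "ln (real n powr t - 1) \<le> ln (real (m n))" using elim by (intro ln_mono) auto
      moreover have "ln (real n) > 0" using elim by simp
      ultimately show ?case by (intro divide_right_mono) auto
    qed
    show "eventually (\<lambda>n. ln (real (m n)) / ln (real n) \<le> t) sequentially"
      using ev eventually_ge_at_top[of 2]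
    proof eventually_elim
      case (elim n)
      have "real (m n) \<le> real n powr t" unfolding m_def by simp
      moreover have "real (m n) > 0" using elim unfolding m_def by linarith
      ultimately have "ln (real (m n)) \<le> ln (real n powr t)" by (intro ln_mono) auto
      also have "\<dots> = t * ln (real n)" using elim by (simp add: ln_powr)
      finally have "ln (real (m n)) \<le> t * ln (real n)" .
      moreover have "ln (real n) > 0" using elim by simp
      ultimately show ?case by (simp add: divide_le_eq)
    qed
    show "(\<lambda>n. ln (real n powr t - 1) / ln (real n)) \<longlonglongrightarrow> t" using t by real_asymp
  qed simp
  have L3: "(\<lambda>n. L (t * ln (real n)) / L (ln (real n))) \<longlonglongrightarrow> 1"
    by (rule filterlim_compose[OF sv_lim[OF sv t(1)] lnlim])
  have L2: "(\<lambda>n. L (ln (real (m n))) / L (t * ln (real n))) \<longlonglongrightarrow> 1"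
  proof (rule sv_ratio_lim[OF sv tlnlim])
    have "(\<lambda>n. (ln (real (m n)) / ln (real n)) / t) \<longlonglongrightarrow> t / t" by (intro tendsto_intros lnm) (use t in simp)
    then show "(\<lambda>n. ln (real (m n)) / (t * ln (real n))) \<longlonglongrightarrow> 1" using t by (simp add: mult.commute)
  qed
  have P: "(\<lambda>n. (ln (real (m n)) / ln (real n)) powr (- \<gamma>)) \<longlonglongrightarrow> t powr (- \<gamma>)"
    by (rule tendsto_powr[OF lnm tendsto_const]) (use t in simp)
  have lim: "(\<lambda>n. St a (real (m n)) / G (m n) * (L (ln (real (m n))) / L (t * ln (real n))) *
      (L (t * ln (real n)) / L (ln (real n))) * (ln (real (m n)) / ln (real n)) powr (- \<gamma>) /
      (St a (real n) / G n)) \<longlonglongrightarrow> t powr (- \<gamma>)"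
  proof -
    have "(\<lambda>n. St a (real (m n)) / G (m n) * (L (ln (real (m n))) / L (t * ln (real n))) *
      (L (t * ln (real n)) / L (ln (real n))) * (ln (real (m n)) / ln (real n)) powr (- \<gamma>) /
      (St a (real n) / G n)) \<longlonglongrightarrow> 1 * 1 * 1 * t powr (- \<gamma>) / 1"
      by (intro tendsto_intros h1 h2 L2 L3 P) simp
    then show ?thesis by (simp only: mult_1_left div_by_1)
  qed
  show ?thesis
  proof (rule Lim_transform_eventually[OF lim])
    have e1: "eventually (\<lambda>n. ln (real (m n)) \<ge> max A 1) sequentially" using lnmlim[unfolded filterlim_at_top, rule_format, of "max A 1"] .
    have e2: "eventually (\<lambda>n. t * ln (real n) \<ge> A) sequentially" using tlnlim[unfolded filterlim_at_top, rule_format, of A] .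
    have e3: "eventually (\<lambda>n. ln (real n) \<ge> max A 1) sequentially" using lnlim[unfolded filterlim_at_top, rule_format, of "max A 1"] .
    from e1 e2 e3 show "eventually (\<lambda>n. St a (real (m n)) / G (m n) * (L (ln (real (m n))) / L (t * ln (real n))) *
      (L (t * ln (real n)) / L (ln (real n))) * (ln (real (m n)) / ln (real n)) powr (- \<gamma>) /
      (St a (real n) / G n) = St a (real n powr t) / St a (real n)) sequentially"
    proof eventually_elim
      case (elim n)
      have Lm: "L (ln (real (m n))) > 0" using elim A by simp
      have Lt: "L (t * ln (real n)) > 0" using elim A by simp
      have Ln: "L (ln (real n)) > 0" using elim A by simp
      have lm: "ln (real (m n)) > 0" using elim by simp
      have ln: "ln (real n) > 0" using elim by simp
      have Sm: "St a (real (m n)) > 0" "St a (real n) > 0" using Spos by auto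
      have Seq: "St a (real n powr t) = St a (real (m n))" unfolding m_def by (rule St_floor) simp
      have pw: "(ln (real (m n)) / ln (real n)) powr (- \<gamma>) = ln (real n) powr \<gamma> / ln (real (m n)) powr \<gamma>"
        using lm ln by (simp add: powr_minus_divide powr_divide)
      have p1: "ln (real n) powr \<gamma> > 0" "ln (real (m n)) powr \<gamma> > 0" using lm ln by auto
      show ?case unfolding pw Seq G_def using Lm Lt Ln Sm p1 \<gamma> by (simp add: field_simps)
    qed
  qed
qed

end


lemma harm_low:
  assumes "m \<le> n"
  shows "ln (real n + 1) - ln (real m + 1) \<le> (\<Sum>k\<in>{m<..n}. 1 / real k)"
proof -
  have "(\<Sum>k\<in>{m<..n}. (- ln (real k)) - (- ln (real (Suc k)))) = - ln (real (Suc m)) - (- ln (real (Suc n)))"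
    by (rule tele2[OF assms, of "\<lambda>k. - ln (real k)"])
  moreover have "(\<Sum>k\<in>{m<..n}. (- ln (real k)) - (- ln (real (Suc k)))) \<le> (\<Sum>k\<in>{m<..n}. 1 / real k)"
  proof (rule sum_mono)
    fix k assume "k \<in> {m<..n}"
    then have k: "real k \<ge> 1" by simp
    have "ln ((real k + 1) / real k) \<le> (real k + 1) / real k - 1" using k by (intro ln_le_minus_one) auto
    then have "ln (real k + 1) - ln (real k) \<le> 1 / real k" using k by (simp add: ln_div field_simps)
    then show "(- ln (real k)) - (- ln (real (Suc k))) \<le> 1 / real k" by (simp add: add.commute)
  qed
  ultimately show ?thesis by (simp add: add.commute)
qed

lemma harm_up:
  assumes "1 \<le> m" "m \<le> n"
  shows "(\<Sum>k\<in>{m<..n}. 1 / real k) \<le> ln (real n) - ln (real m)"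
proof -
  have "(\<Sum>k\<in>{m<..n}. (- ln (real (k - 1))) - (- ln (real k))) = - ln (real m) - (- ln (real n))"
    by (rule tele1[OF assms(2), of "\<lambda>k. - ln (real k)"])
  moreover have "(\<Sum>k\<in>{m<..n}. 1 / real k) \<le> (\<Sum>k\<in>{m<..n}. (- ln (real (k - 1))) - (- ln (real k)))"
  proof (rule sum_mono)
    fix k assume "k \<in> {m<..n}"
    then have k: "real k \<ge> 2" "real (k - 1) = real k - 1" using assms by auto
    have "ln ((real k - 1) / real k) \<le> (real k - 1) / real k - 1" using k by (intro ln_le_minus_one) auto
    then have "ln (real k - 1) - ln (real k) \<le> - (1 / real k)" using k by (simp add: ln_div field_simps)
    then show "1 / real k \<le> (- ln (real (k - 1))) - (- ln (real k))" using k by simp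
  qed
  ultimately show ?thesis by simp
qed


locale p3 = tailseq +
  fixes \<gamma> x0 :: real and Lw :: "real \<Rightarrow> real"
  assumes \<gamma>: "\<gamma> > 0" and svw: "slowly_varying Lw" and anti: "antimono_on {x0..} Lw"
    and ak: "(\<lambda>k. a k / (Lw (real k) / real k)) \<longlonglongrightarrow> 1"
    and apos: "eventually (\<lambda>k. a k > 0) sequentially"
    and hyp: "\<And>t. 0 < t \<Longrightarrow> t < 1 \<Longrightarrow> (\<lambda>n. St a (real n powr t) / St a (real n)) \<longlonglongrightarrow> t powr (- \<gamma>)"
begin

lemma Spos: "St a x > 0" by (rule St_pos[OF apos])

lemma antiD: "x0 \<le> x \<Longrightarrow> x \<le> y \<Longrightarrow> Lw y \<le> Lw x"
  using anti unfolding monotone_on_def by auto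

lemma band:
  assumes \<eta>: "\<eta> > 0"
  shows "\<exists>K. \<forall>k\<ge>K. (1 - \<eta>) * (Lw (real k) / real k) \<le> a k \<and> a k \<le> (1 + \<eta>) * (Lw (real k) / real k)
     \<and> Lw (real k) > 0 \<and> real k \<ge> x0 \<and> k \<ge> 2"
proof -
  obtain A where A: "\<And>x. x \<ge> A \<Longrightarrow> Lw x > 0" using sv_pos[OF svw] by blast
  have e1: "eventually (\<lambda>k. \<bar>a k / (Lw (real k) / real k) - 1\<bar> < \<eta>) sequentially"
    using ak \<eta> unfolding tendsto_iff dist_real_def by blast
  have e2: "eventually (\<lambda>k::nat. real k \<ge> max (max A x0) 2) sequentially"
    using filterlim_real_sequentially[unfolded filterlim_at_top, rule_format, of "max (max A x0) 2"] .
  from e1 e2 have "eventually (\<lambda>k. (1 - \<eta>) * (Lw (real k) / real k) \<le> a k \<and> a k \<le> (1 + \<eta>) * (Lw (real k) / real k)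
     \<and> Lw (real k) > 0 \<and> real k \<ge> x0 \<and> k \<ge> 2) sequentially"
  proof eventually_elim
    case (elim k)
    have Lk: "Lw (real k) > 0" using elim A by simp
    have kp: "real k > 0" using elim by simp
    define b where "b = Lw (real k) / real k"
    have bp: "b > 0" unfolding b_def using Lk kp by simp
    have "\<bar>(a k - b) / b\<bar> < \<eta>" using elim bp unfolding b_def[symmetric] by (simp add: diff_divide_distrib)
    then have "\<bar>a k - b\<bar> < \<eta> * b" using bp by (simp add: abs_div pos_divide_less_eq)
    then have "(1 - \<eta>) * b \<le> a k \<and> a k \<le> (1 + \<eta>) * b" by (simp add: algebra_simps abs_less_iff)
    then show ?case unfolding b_def using Lk elim by auto
  qed
  then show ?thesis by (auto simp: eventually_sequentially)
qed

lemma upper_bound: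
  assumes t: "0 < t" "t < 1" and \<eta>: "0 < \<eta>" "\<eta> < 1"
  shows "eventually (\<lambda>n. Lw (real n) * ln (real n) / St a (real n) \<le>
     (St a (real n powr t) / St a (real n) - 1) * (ln (real n) / (ln (real n + 1) - ln (real (nat \<lfloor>real n powr t\<rfloor>) + 1))) / (1 - \<eta>)) sequentially"
proof -
  define m where "m n = nat \<lfloor>real n powr t\<rfloor>" for n
  obtain K where K: "\<And>k. k \<ge> K \<Longrightarrow> (1 - \<eta>) * (Lw (real k) / real k) \<le> a k \<and> a k \<le> (1 + \<eta>) * (Lw (real k) / real k)
     \<and> Lw (real k) > 0 \<and> real k \<ge> x0 \<and> k \<ge> 2" using band[OF \<eta>(1)] by blast
  have mlim: "filterlim m sequentially sequentially" unfolding m_def by (rule filterlim_nat_floor_powr[OF t(1)])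
  have "eventually (\<lambda>n. m n \<ge> K) sequentially" using mlim by (simp add: filterlim_at_top)
  with eventually_ge_at_top[of 2] show ?thesis unfolding m_def[symmetric]
  proof eventually_elim
    case (elim n)
    define mn where "mn = m n"
    have n2: "real n \<ge> 2" using elim by simp
    have mK: "mn \<ge> K" using elim unfolding mn_def by simp
    have "real mn \<le> real n powr t" unfolding mn_def m_def by simp
    also have "\<dots> < real n powr 1" using t n2 by (intro powr_less_mono) auto
    finally have mn_n: "mn < n" using n2 by simp
    have Ln: "Lw (real n) > 0" and Lx: "x0 \<le> real n" using K[of n] mK mn_n by auto
    have S1: "St a (real mn) = (\<Sum>k\<in>{mn<..n}. a k) + St a (real n)" using St_diff mn_n by simp
    have "(\<Sum>k\<in>{mn<..n}. (1 - \<eta>) * Lw (real n) * (1 / real k)) \<le> (\<Sum>k\<in>{mn<..n}. a k)"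
    proof (rule sum_mono)
      fix k assume k: "k \<in> {mn<..n}"
      then have kK: "k \<ge> K" using mK by simp
      have kp: "real k > 0" using K[OF kK] by simp
      have "Lw (real n) \<le> Lw (real k)" using K[OF kK] k by (intro antiD) auto
      then have "(1 - \<eta>) * Lw (real n) * (1 / real k) \<le> (1 - \<eta>) * (Lw (real k) / real k)"
        using \<eta> kp by (simp add: divide_right_mono)
      also have "\<dots> \<le> a k" using K[OF kK] by simp
      finally show "(1 - \<eta>) * Lw (real n) * (1 / real k) \<le> a k" .
    qed
    moreover have "(1 - \<eta>) * Lw (real n) * (ln (real n + 1) - ln (real mn + 1)) \<le> (\<Sum>k\<in>{mn<..n}. (1 - \<eta>) * Lw (real n) * (1 / real k))"
      unfolding sum_distrib_left[symmetric] using harm_low[of mn n] mn_n \<eta> Ln by (intro mult_left_mono) auto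
    ultimately have key: "(1 - \<eta>) * Lw (real n) * (ln (real n + 1) - ln (real mn + 1)) \<le> St a (real mn) - St a (real n)"
      using S1 by linarith
    have D: "ln (real n + 1) - ln (real mn + 1) > 0" using mn_n by simp
    have lnp: "ln (real n) > 0" using n2 by simp
    have Sp: "St a (real n) > 0" by (rule Spos)
    have Seq: "St a (real n powr t) = St a (real mn)" unfolding mn_def m_def by (rule St_floor) simp
    define D' where "D' = ln (real n + 1) - ln (real mn + 1)"
    have key': "Lw (real n) \<le> (St a (real mn) - St a (real n)) / ((1 - \<eta>) * D')"
      using key D \<eta> unfolding D'_def[symmetric] by (simp add: pos_le_divide_eq mult.commute mult.left_commute)
    have "Lw (real n) * ln (real n) / St a (real n) \<le> (St a (real mn) - St a (real n)) / ((1 - \<eta>) * D') * ln (real n) / St a (real n)"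
      using key' lnp Sp by (intro divide_right_mono mult_right_mono) auto
    also have "\<dots> = (St a (real mn) / St a (real n) - 1) * (ln (real n) / D') / (1 - \<eta>)"
      using Sp D \<eta> unfolding D'_def[symmetric] by (simp add: field_simps)
    finally show ?case unfolding Seq D'_def mn_def .
  qed
qed

lemma upper_lim:
  assumes t: "0 < t" "t < 1" and \<eta>: "\<eta> < 1"
  shows "(\<lambda>n. (St a (real n powr t) / St a (real n) - 1) * (ln (real n) / (ln (real n + 1) - ln (real (nat \<lfloor>real n powr t\<rfloor>) + 1))) / (1 - \<eta>))
     \<longlonglongrightarrow> (t powr (- \<gamma>) - 1) * (1 / (1 - t)) / (1 - \<eta>)"
proof -
  define m where "m n = nat \<lfloor>real n powr t\<rfloor>" for n
  have lm: "(\<lambda>n. ln (real (m n) + 1) / ln (real n)) \<longlonglongrightarrow> t"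
  proof (rule tendsto_sandwich[of "\<lambda>_. t" _ _ "\<lambda>n. ln (real n powr t + 1) / ln (real n)"])
    show "eventually (\<lambda>n. t \<le> ln (real (m n) + 1) / ln (real n)) sequentially"
      using eventually_ge_at_top[of 2]
    proof eventually_elim
      case (elim n)
      have "real n powr t \<le> real (m n) + 1" unfolding m_def by linarith
      then have "ln (real n powr t) \<le> ln (real (m n) + 1)" using elim by (intro ln_mono) auto
      then have "t * ln (real n) \<le> ln (real (m n) + 1)" using elim by (simp add: ln_powr)
      moreover have "ln (real n) > 0" using elim by simp
      ultimately show ?case by (simp add: le_divide_eq)
    qed
    show "eventually (\<lambda>n. ln (real (m n) + 1) / ln (real n) \<le> ln (real n powr t + 1) / ln (real n)) sequentially"
      using eventually_ge_at_top[of 2]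
    proof eventually_elim
      case (elim n)
      have "real (m n) \<le> real n powr t" unfolding m_def by simp
      then have "ln (real (m n) + 1) \<le> ln (real n powr t + 1)" by (intro ln_mono) auto
      moreover have "ln (real n) > 0" using elim by simp
      ultimately show ?case by (intro divide_right_mono) auto
    qed
    show "(\<lambda>n. ln (real n powr t + 1) / ln (real n)) \<longlonglongrightarrow> t" using t by real_asymp
  qed simp
  have l1: "(\<lambda>n::nat. ln (real n + 1) / ln (real n)) \<longlonglongrightarrow> 1" by real_asymp
  have "(\<lambda>n. 1 / (ln (real n + 1) / ln (real n) - ln (real (m n) + 1) / ln (real n))) \<longlonglongrightarrow> 1 / (1 - t)"
    using t by (intro tendsto_intros l1 lm) auto
  moreover have "eventually (\<lambda>n. 1 / (ln (real n + 1) / ln (real n) - ln (real (m n) + 1) / ln (real n)) =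
      ln (real n) / (ln (real n + 1) - ln (real (m n) + 1))) sequentially"
    using eventually_ge_at_top[of 2]
  proof eventually_elim
    case (elim n)
    then have "ln (real n) > 0" by simp
    then show ?case by (simp add: diff_divide_distrib[symmetric])
  qed
  ultimately have l2: "(\<lambda>n. ln (real n) / (ln (real n + 1) - ln (real (m n) + 1))) \<longlonglongrightarrow> 1 / (1 - t)"
    by (rule Lim_transform_eventually)
  show ?thesis unfolding m_def[symmetric]
    using \<eta> by (intro tendsto_intros hyp t l2) auto
qed

lemma lower_bound:
  assumes t: "0 < t" "t < 1" and \<eta>: "0 < \<eta>"
  shows "eventually (\<lambda>m. (1 - St a (real (nat \<lceil>real m powr (1/t)\<rceil>)) / St a (real m)) *
      (ln (real m) / (ln (real (nat \<lceil>real m powr (1/t)\<rceil>)) - ln (real m))) / (1 + \<eta>)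
      \<le> Lw (real m) * ln (real m) / St a (real m)) sequentially"
proof -
  define M where "M m = nat \<lceil>real m powr (1/t)\<rceil>" for m
  obtain K where K: "\<And>k. k \<ge> K \<Longrightarrow> (1 - \<eta>) * (Lw (real k) / real k) \<le> a k \<and> a k \<le> (1 + \<eta>) * (Lw (real k) / real k)
     \<and> Lw (real k) > 0 \<and> real k \<ge> x0 \<and> k \<ge> 2" using band[OF \<eta>] by blast
  have ev: "eventually (\<lambda>m::nat. real m powr (1/t) > real m + 1) sequentially" using t by real_asymp
  from ev eventually_ge_at_top[of K] show ?thesis unfolding M_def[symmetric]
  proof eventually_elim
    case (elim m)
    define Mm where "Mm = M m"
    have m2: "m \<ge> 2" and Lm: "Lw (real m) > 0" and x0m: "x0 \<le> real m" using K[of m] elim by auto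
    have "real Mm \<ge> real m powr (1/t)" unfolding Mm_def M_def by linarith
    then have Mgt: "real Mm > real m + 1" using elim by linarith
    then have mM: "m < Mm" by simp
    have S1: "St a (real m) = (\<Sum>k\<in>{m<..Mm}. a k) + St a (real Mm)" using St_diff mM by simp
    have "(\<Sum>k\<in>{m<..Mm}. a k) \<le> (\<Sum>k\<in>{m<..Mm}. (1 + \<eta>) * Lw (real m) * (1 / real k))"
    proof (rule sum_mono)
      fix k assume k: "k \<in> {m<..Mm}"
      then have kK: "k \<ge> K" using elim by simp
      have kp: "real k > 0" using K[OF kK] by simp
      have "a k \<le> (1 + \<eta>) * (Lw (real k) / real k)" using K[OF kK] by simp
      also have "Lw (real k) \<le> Lw (real m)" using x0m k by (intro antiD) auto
      then have "(1 + \<eta>) * (Lw (real k) / real k) \<le> (1 + \<eta>) * Lw (real m) * (1 / real k)"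
        using \<eta> kp by (simp add: divide_right_mono)
      finally show "a k \<le> (1 + \<eta>) * Lw (real m) * (1 / real k)" .
    qed
    also have "\<dots> \<le> (1 + \<eta>) * Lw (real m) * (ln (real Mm) - ln (real m))"
      unfolding sum_distrib_left[symmetric] using harm_up[of m Mm] mM m2 \<eta> Lm by (intro mult_left_mono) auto
    finally have key: "St a (real m) - St a (real Mm) \<le> (1 + \<eta>) * Lw (real m) * (ln (real Mm) - ln (real m))"
      using S1 by linarith
    define D where "D = ln (real Mm) - ln (real m)"
    have D: "D > 0" unfolding D_def using mM m2 by simp
    have lnp: "ln (real m) > 0" using m2 by simp
    have Sp: "St a (real m) > 0" by (rule Spos)
    have "(1 - St a (real Mm) / St a (real m)) * (ln (real m) / D) / (1 + \<eta>) =
        (St a (real m) - St a (real Mm)) * ln (real m) / (St a (real m) * D * (1 + \<eta>))"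
      using Sp D \<eta> by (simp add: field_simps)
    also have "\<dots> \<le> ((1 + \<eta>) * Lw (real m) * D) * ln (real m) / (St a (real m) * D * (1 + \<eta>))"
      using key lnp Sp D \<eta> unfolding D_def[symmetric] by (intro divide_right_mono mult_right_mono) auto
    also have "\<dots> = (Lw (real m) * ln (real m)) * (D * (1 + \<eta>)) / (St a (real m) * (D * (1 + \<eta>)))"
      by (simp add: algebra_simps)
    also have "\<dots> = Lw (real m) * ln (real m) / St a (real m)"
      using D \<eta> by (intro mult_divide_mult_cancel_right) simp
    finally show ?case unfolding D_def Mm_def .
  qed
qed

lemma lower_lim:
  assumes t: "0 < t" "t < 1" and \<eta>: "0 < \<eta>"
  shows "(\<lambda>m. (1 - St a (real (nat \<lceil>real m powr (1/t)\<rceil>)) / St a (real m)) *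
      (ln (real m) / (ln (real (nat \<lceil>real m powr (1/t)\<rceil>)) - ln (real m))) / (1 + \<eta>))
      \<longlonglongrightarrow> (1 - t powr \<gamma>) * (1 / (1 / t - 1)) / (1 + \<eta>)"
proof -
  define M where "M m = nat \<lceil>real m powr (1/t)\<rceil>" for m
  have Mge: "real (M m) \<ge> real m powr (1/t)" for m unfolding M_def by linarith
  have Mlt: "real (M m) < real m powr (1/t) + 1" for m
  proof -
    have "real m powr (1/t) \<ge> 0" by simp
    then have "real (M m) = of_int \<lceil>real m powr (1/t)\<rceil>" unfolding M_def by simp
    then show ?thesis using ceiling_correct[of "real m powr (1/t)"] by linarith
  qed
  have Mm: "m \<le> M m" for m
  proof (cases "m = 0")
    case False
    then have "real m \<le> real m powr (1/t)"
      using t powr_mono[of 1 "1/t" "real m"] by simp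
    then show ?thesis using Mge[of m] by linarith
  qed simp
  have Mlim: "filterlim M sequentially sequentially"
    by (rule filterlim_at_top_mono[OF filterlim_ident]) (use Mm in simp)
  have h: "(\<lambda>m. St a (real (M m) powr t) / St a (real (M m))) \<longlonglongrightarrow> t powr (- \<gamma>)"
    by (rule filterlim_compose[OF hyp[OF t] Mlim])
  have evf: "eventually (\<lambda>m::nat. (real m powr (1/t) + 1) powr t < real m + 1) sequentially" using t by real_asymp
  have SM: "eventually (\<lambda>m. St a (real (M m) powr t) = St a (real m)) sequentially"
    using evf eventually_ge_at_top[of 1]
  proof eventually_elim
    case (elim m)
    have "real m = (real m powr (1/t)) powr t" using t elim by (simp add: powr_powr)
    also have "\<dots> \<le> real (M m) powr t" using Mge t by (intro powr_mono2) auto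
    finally have l: "real m \<le> real (M m) powr t" .
    have "real (M m) powr t \<le> (real m powr (1/t) + 1) powr t" using Mlt t by (intro powr_mono2) (auto intro: less_imp_le)
    then have u: "real (M m) powr t < real m + 1" using elim by linarith
    have "\<lfloor>real (M m) powr t\<rfloor> = int m" using l u by (simp add: floor_eq_iff)
    then have "nat \<lfloor>real (M m) powr t\<rfloor> = m" by simp
    then show ?case using St_floor[of "real (M m) powr t"] by simp
  qed
  have ratio: "(\<lambda>m. St a (real (M m)) / St a (real m)) \<longlonglongrightarrow> t powr \<gamma>"
  proof -
    have "(\<lambda>m. 1 / (St a (real (M m) powr t) / St a (real (M m)))) \<longlonglongrightarrow> 1 / t powr (- \<gamma>)"
      using t by (intro tendsto_intros h) auto
    then have "(\<lambda>m. 1 / (St a (real (M m) powr t) / St a (real (M m)))) \<longlonglongrightarrow> t powr \<gamma>"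
      using t by (simp add: powr_minus_divide)
    moreover have "eventually (\<lambda>m. 1 / (St a (real (M m) powr t) / St a (real (M m))) = St a (real (M m)) / St a (real m)) sequentially"
      using SM by eventually_elim simp
    ultimately show ?thesis by (rule Lim_transform_eventually)
  qed
  have lM: "(\<lambda>m. ln (real (M m)) / ln (real m)) \<longlonglongrightarrow> 1 / t"
  proof (rule tendsto_sandwich[of "\<lambda>_. 1/t" _ _ "\<lambda>m. ln (real m powr (1/t) + 1) / ln (real m)"])
    show "eventually (\<lambda>m. 1 / t \<le> ln (real (M m)) / ln (real m)) sequentially"
      using eventually_ge_at_top[of 2]
    proof eventually_elim
      case (elim m)
      have "ln (real m powr (1/t)) \<le> ln (real (M m))" using elim Mge[of m] by (intro ln_mono) auto
      then have "(1/t) * ln (real m) \<le> ln (real (M m))" using elim by (simp add: ln_powr)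
      moreover have "ln (real m) > 0" using elim by simp
      ultimately show ?case by (simp add: le_divide_eq)
    qed
    show "eventually (\<lambda>m. ln (real (M m)) / ln (real m) \<le> ln (real m powr (1/t) + 1) / ln (real m)) sequentially"
      using eventually_ge_at_top[of 2]
    proof eventually_elim
      case (elim m)
      have "M m \<ge> 2" using Mm[of m] elim by linarith
      then have "ln (real (M m)) \<le> ln (real m powr (1/t) + 1)" using Mlt[of m] by (intro ln_mono) auto
      moreover have "ln (real m) > 0" using elim by simp
      ultimately show ?case by (intro divide_right_mono) auto
    qed
    show "(\<lambda>m. ln (real m powr (1/t) + 1) / ln (real m)) \<longlonglongrightarrow> 1/t" using t by real_asymp
  qed simp
  have "(\<lambda>m. 1 / (ln (real (M m)) / ln (real m) - 1)) \<longlonglongrightarrow> 1 / (1 / t - 1)"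
    using t by (intro tendsto_intros lM) (auto simp: field_simps)
  moreover have "eventually (\<lambda>m. 1 / (ln (real (M m)) / ln (real m) - 1) = ln (real m) / (ln (real (M m)) - ln (real m))) sequentially"
    using eventually_ge_at_top[of 2]
  proof eventually_elim
    case (elim m)
    then have "ln (real m) > 0" by simp
    then show ?case by (simp add: field_simps)
  qed
  ultimately have l2: "(\<lambda>m. ln (real m) / (ln (real (M m)) - ln (real m))) \<longlonglongrightarrow> 1 / (1 / t - 1)"
    by (rule Lim_transform_eventually)
  show ?thesis unfolding M_def[symmetric]
    using \<eta> by (intro tendsto_intros ratio l2) auto
qed

lemma key_lim: "(\<lambda>n. Lw (real n) * ln (real n) / St a (real n)) \<longlonglongrightarrow> \<gamma>"
proof -
  define X where "X n = Lw (real n) * ln (real n) / St a (real n)" for n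
  define hi where "hi e = ((1 - e) powr (- \<gamma>) - 1) * (1 / (1 - (1 - e))) / (1 - e) / \<gamma> + e" for e :: real
  define lo where "lo e = (1 - (1 - e) powr \<gamma>) * (1 / (1 / (1 - e) - 1)) / (1 + e) / \<gamma> - e" for e :: real
  have "(\<lambda>n. X n / \<gamma>) \<longlonglongrightarrow> 1"
  proof (rule tendsto_from_bounds[of lo hi "1/2"])
    show "(lo \<longlongrightarrow> 1) (at_right 0)" unfolding lo_def using \<gamma> by real_asymp
    show "(hi \<longlongrightarrow> 1) (at_right 0)" unfolding hi_def using \<gamma> by real_asymp
    show "(1/2::real) > 0" by simp
  next
    fix e :: real assume e: "0 < e" "e < 1/2"
    define t where "t = 1 - e"
    have t: "0 < t" "t < 1" unfolding t_def using e by auto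
    have e1: "e < 1" using e by simp
    have up: "eventually (\<lambda>n. X n / \<gamma> \<le> hi e) sequentially"
    proof -
      have lim: "(\<lambda>n. (St a (real n powr t) / St a (real n) - 1) * (ln (real n) / (ln (real n + 1) - ln (real (nat \<lfloor>real n powr t\<rfloor>) + 1))) / (1 - e))
         \<longlonglongrightarrow> (t powr (- \<gamma>) - 1) * (1 / (1 - t)) / (1 - e)" by (rule upper_lim[OF t e1])
      have gh: "g * (Q / g + x) = Q + g * x" if "g \<noteq> 0" for g Q x :: real
        using that by (simp add: distrib_left)
      have "\<gamma> * hi e = (t powr (- \<gamma>) - 1) * (1 / (1 - t)) / (1 - e) + \<gamma> * e"
        unfolding hi_def t_def using \<gamma> by (intro gh) simp
      then have "(t powr (- \<gamma>) - 1) * (1 / (1 - t)) / (1 - e) < \<gamma> * hi e"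
        using \<gamma> e by simp
      from order_tendstoD(2)[OF lim this] upper_bound[OF t e(1) e1]
      show ?thesis
      proof eventually_elim
        case (elim n)
        then have "X n < \<gamma> * hi e" unfolding X_def by linarith
        then show ?case using \<gamma> by (simp add: divide_less_eq mult.commute less_imp_le)
      qed
    qed
    have low: "eventually (\<lambda>n. lo e \<le> X n / \<gamma>) sequentially"
    proof -
      have lim: "(\<lambda>m. (1 - St a (real (nat \<lceil>real m powr (1/t)\<rceil>)) / St a (real m)) *
          (ln (real m) / (ln (real (nat \<lceil>real m powr (1/t)\<rceil>)) - ln (real m))) / (1 + e))
          \<longlonglongrightarrow> (1 - t powr \<gamma>) * (1 / (1 / t - 1)) / (1 + e)" by (rule lower_lim[OF t e(1)])
      have gl: "g * (Q / g - x) = Q - g * x" if "g \<noteq> 0" for g Q x :: real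
        using that by (simp add: right_diff_distrib)
      have "\<gamma> * lo e = (1 - t powr \<gamma>) * (1 / (1 / t - 1)) / (1 + e) - \<gamma> * e"
        unfolding lo_def t_def using \<gamma> by (intro gl) simp
      then have "\<gamma> * lo e < (1 - t powr \<gamma>) * (1 / (1 / t - 1)) / (1 + e)"
        using \<gamma> e by simp
      from order_tendstoD(1)[OF lim this] lower_bound[OF t e(1)]
      show ?thesis
      proof eventually_elim
        case (elim n)
        then have "\<gamma> * lo e < X n" unfolding X_def by linarith
        then show ?case using \<gamma> by (simp add: less_divide_eq mult.commute less_imp_le)
      qed
    qed
    from low up show "eventually (\<lambda>n. lo e \<le> X n / \<gamma> \<and> X n / \<gamma> \<le> hi e) sequentially"
      by eventually_elim auto
  qed
  then have "(\<lambda>n. \<gamma> * (X n / \<gamma>)) \<longlonglongrightarrow> \<gamma> * 1" by (intro tendsto_intros)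
  then show ?thesis using \<gamma> unfolding X_def by simp
qed

end


lemma lnexp_lim: "((\<lambda>u::real. ln (exp u - 1) / u) \<longlongrightarrow> 1) at_top"
  by real_asymp

context p3
begin

lemma Ssucc: "(\<lambda>n. St a (real (Suc n)) / St a (real n)) \<longlonglongrightarrow> 1"
proof -
  obtain K where K: "\<And>k. k \<ge> K \<Longrightarrow> (1 - 1) * (Lw (real k) / real k) \<le> a k \<and> a k \<le> (1 + 1) * (Lw (real k) / real k)
     \<and> Lw (real k) > 0 \<and> real k \<ge> x0 \<and> k \<ge> 2" using band[of 1] by auto
  have split: "St a (real n) = a (Suc n) + St a (real (Suc n))" for n
  proof -
    have "{n<..Suc n} = {Suc n}" by auto
    then show ?thesis using St_diff[of n "Suc n"] by simp
  qed
  have z: "(\<lambda>n. a (Suc n) / St a (real n)) \<longlonglongrightarrow> 0"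
  proof (rule tendsto_sandwich[of "\<lambda>_. 0" _ _ "\<lambda>n. 2 * (Lw (real n) * ln (real n) / St a (real n)) * (1 / (real n * ln (real n)))"])
    show "eventually (\<lambda>n. 0 \<le> a (Suc n) / St a (real n)) sequentially"
      using a_nonneg St_nonneg by (auto intro!: always_eventually divide_nonneg_nonneg)
    show "eventually (\<lambda>n. a (Suc n) / St a (real n) \<le> 2 * (Lw (real n) * ln (real n) / St a (real n)) * (1 / (real n * ln (real n)))) sequentially"
      using eventually_ge_at_top[of K]
    proof eventually_elim
      case (elim n)
      note Kn = K[OF elim] and KS = K[of "Suc n"]
      have n2: "real n \<ge> 2" using Kn by simp
      have "a (Suc n) \<le> 2 * (Lw (real (Suc n)) / real (Suc n))" using KS elim by simp
      also have "Lw (real (Suc n)) \<le> Lw (real n)" using Kn by (intro antiD) auto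
      then have "2 * (Lw (real (Suc n)) / real (Suc n)) \<le> 2 * (Lw (real n) / real n)"
        using Kn KS elim n2 by (intro mult_left_mono frac_le) auto
      finally have "a (Suc n) \<le> 2 * (Lw (real n) / real n)" .
      then have "a (Suc n) / St a (real n) \<le> 2 * (Lw (real n) / real n) / St a (real n)"
        using Spos[of "real n"] by (intro divide_right_mono) auto
      also have "\<dots> = 2 * (Lw (real n) * ln (real n) / St a (real n)) * (1 / (real n * ln (real n)))"
        using n2 Spos[of "real n"] by (simp add: field_simps)
      finally show ?case .
    qed
    have "(\<lambda>n. 1 / (real n * ln (real n))) \<longlonglongrightarrow> 0" by real_asymp
    then have "(\<lambda>n. 2 * (Lw (real n) * ln (real n) / St a (real n)) * (1 / (real n * ln (real n)))) \<longlonglongrightarrow> 2 * \<gamma> * 0"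
      by (intro tendsto_intros key_lim)
    then show "(\<lambda>n. 2 * (Lw (real n) * ln (real n) / St a (real n)) * (1 / (real n * ln (real n)))) \<longlonglongrightarrow> 0" by simp
  qed simp
  have "(\<lambda>n. 1 - a (Suc n) / St a (real n)) \<longlonglongrightarrow> 1 - 0" by (intro tendsto_intros z)
  moreover have "1 - a (Suc n) / St a (real n) = St a (real (Suc n)) / St a (real n)" for n
    using Spos[of "real n"] split[of n] by (simp add: field_simps)
  ultimately show ?thesis by simp
qed

definition NN :: "real \<Rightarrow> nat" where "NN u = nat \<lfloor>exp u\<rfloor>"

lemma NN_lim: "filterlim NN sequentially at_top"
  unfolding NN_def
  by (intro filterlim_compose[OF filterlim_nat_sequentially] filterlim_compose[OF filterlim_floor_sequentially] exp_at_top)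

lemma NN_le: "real (NN u) \<le> exp u" unfolding NN_def by simp

lemma NN_gt: "exp u < real (NN u) + 1" unfolding NN_def by linarith

lemma St_exp: "St a (exp u) = St a (real (NN u))" unfolding NN_def by (rule St_floor) simp

lemma Shat:
  assumes c: "0 < c" "c < 1"
  shows "((\<lambda>u. St a (exp (c * u)) / St a (exp u)) \<longlongrightarrow> c powr (- \<gamma>)) at_top"
proof (rule tendsto_sandwich[of "\<lambda>u. St a (real (Suc (NN u)) powr c) / St a (real (Suc (NN u))) * (St a (real (Suc (NN u))) / St a (real (NN u)))"
      _ _ "\<lambda>u. St a (real (NN u) powr c) / St a (real (NN u))"])
  have ee: "exp (c * u) = exp u powr c" for u by (simp add: powr_def mult.commute)
  show "eventually (\<lambda>u. St a (real (Suc (NN u)) powr c) / St a (real (Suc (NN u))) * (St a (real (Suc (NN u))) / St a (real (NN u)))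
      \<le> St a (exp (c * u)) / St a (exp u)) at_top"
  proof (intro always_eventually allI)
    fix u :: real
    have "exp (c * u) \<le> real (Suc (NN u)) powr c" unfolding ee using NN_gt[of u] c by (intro powr_mono2) auto
    then have "St a (real (Suc (NN u)) powr c) \<le> St a (exp (c * u))" by (rule St_mono)
    then show "St a (real (Suc (NN u)) powr c) / St a (real (Suc (NN u))) * (St a (real (Suc (NN u))) / St a (real (NN u)))
      \<le> St a (exp (c * u)) / St a (exp u)"
      unfolding St_exp using Spos[of "real (Suc (NN u))"] Spos[of "real (NN u)"] by (simp add: divide_right_mono)
  qed
  show "eventually (\<lambda>u. St a (exp (c * u)) / St a (exp u) \<le> St a (real (NN u) powr c) / St a (real (NN u))) at_top"
  proof (intro always_eventually allI)
    fix u :: real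
    have "real (NN u) powr c \<le> exp (c * u)" unfolding ee using NN_le[of u] c by (intro powr_mono2) auto
    then have "St a (exp (c * u)) \<le> St a (real (NN u) powr c)" by (rule St_mono)
    then show "St a (exp (c * u)) / St a (exp u) \<le> St a (real (NN u) powr c) / St a (real (NN u))"
      unfolding St_exp using Spos[of "real (NN u)"] by (simp add: divide_right_mono)
  qed
  show "((\<lambda>u. St a (real (NN u) powr c) / St a (real (NN u))) \<longlongrightarrow> c powr (- \<gamma>)) at_top"
    by (rule filterlim_compose[OF hyp[OF c] NN_lim])
  have "((\<lambda>u. St a (real (Suc (NN u)) powr c) / St a (real (Suc (NN u))) * (St a (real (Suc (NN u))) / St a (real (NN u))))
      \<longlongrightarrow> c powr (- \<gamma>) * 1) at_top"
    by (intro tendsto_mult filterlim_compose[OF hyp[OF c]] filterlim_compose[OF Ssucc NN_lim]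
        filterlim_compose[OF filterlim_Suc NN_lim])
  then show "((\<lambda>u. St a (real (Suc (NN u)) powr c) / St a (real (Suc (NN u))) * (St a (real (Suc (NN u))) / St a (real (NN u))))
      \<longlongrightarrow> c powr (- \<gamma>)) at_top" by simp
qed

lemma NNreal_lim: "filterlim (\<lambda>u. real (NN u)) at_top at_top"
  by (rule filterlim_compose[OF filterlim_real_sequentially NN_lim])

lemma Rlim: "((\<lambda>u. Lw (exp u) / Lw (real (NN u))) \<longlongrightarrow> 1) at_top"
proof (rule tendsto_sandwich[of "\<lambda>u. Lw (2 * real (NN u)) / Lw (real (NN u))" _ _ "\<lambda>_. 1"])
  obtain A where A: "\<And>x. x \<ge> A \<Longrightarrow> Lw x > 0" using sv_pos[OF svw] by blast
  have ev: "eventually (\<lambda>u. real (NN u) \<ge> max (max x0 1) A) at_top"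
    using NNreal_lim[unfolded filterlim_at_top, rule_format, of "max (max x0 1) A"] .
  show "eventually (\<lambda>u. Lw (2 * real (NN u)) / Lw (real (NN u)) \<le> Lw (exp u) / Lw (real (NN u))) at_top"
    using ev
  proof eventually_elim
    case (elim u)
    have "exp u \<le> 2 * real (NN u)" using NN_gt[of u] elim by linarith
    then have "Lw (2 * real (NN u)) \<le> Lw (exp u)" using elim NN_le[of u] by (intro antiD) auto
    moreover have "Lw (real (NN u)) > 0" using elim A by simp
    ultimately show ?case by (intro divide_right_mono) auto
  qed
  show "eventually (\<lambda>u. Lw (exp u) / Lw (real (NN u)) \<le> 1) at_top"
    using ev
  proof eventually_elim
    case (elim u)
    have "Lw (exp u) \<le> Lw (real (NN u))" using elim NN_le[of u] by (intro antiD) auto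
    moreover have "Lw (real (NN u)) > 0" using elim A by simp
    ultimately show ?case by simp
  qed
  show "((\<lambda>u. Lw (2 * real (NN u)) / Lw (real (NN u))) \<longlongrightarrow> 1) at_top"
    by (rule filterlim_compose[OF sv_lim[OF svw] NNreal_lim]) simp
qed simp

lemma Vlim: "((\<lambda>u. u / ln (real (NN u))) \<longlongrightarrow> 1) at_top"
proof -
  have "((\<lambda>u. ln (real (NN u)) / u) \<longlongrightarrow> 1) at_top"
  proof (rule tendsto_sandwich[of "\<lambda>u::real. ln (exp u - 1) / u" _ _ "\<lambda>_. 1"])
    show "eventually (\<lambda>u. ln (exp u - 1) / u \<le> ln (real (NN u)) / u) at_top"
      using eventually_ge_at_top[of 1]
    proof eventually_elim
      case (elim u)
      have "exp u \<ge> 1 + u" by (rule exp_ge_add_one_self)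
      then have "exp u - 1 > 0" using elim by simp
      then have "ln (exp u - 1) \<le> ln (real (NN u))" using NN_gt[of u] by (intro ln_mono) auto
      then show ?case using elim by (intro divide_right_mono) auto
    qed
    show "eventually (\<lambda>u. ln (real (NN u)) / u \<le> 1) at_top"
      using eventually_ge_at_top[of 1]
    proof eventually_elim
      case (elim u)
      have "exp u \<ge> 1 + u" by (rule exp_ge_add_one_self)
      then have "exp u - 1 > 0" using elim by simp
      then have "real (NN u) > 0" using NN_gt[of u] by linarith
      then have "ln (real (NN u)) \<le> ln (exp u)" using NN_le[of u] by (intro ln_mono) auto
      then show ?case using elim by simp
    qed
    show "((\<lambda>u::real. ln (exp u - 1) / u) \<longlongrightarrow> 1) at_top" by (rule lnexp_lim)
  qed simp
  then have "((\<lambda>u. 1 / (ln (real (NN u)) / u)) \<longlongrightarrow> 1 / 1) at_top" by (intro tendsto_intros) auto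
  then show ?thesis by simp
qed

definition LL :: "real \<Rightarrow> real" where "LL u = Lw (exp u) * u powr (1 + \<gamma>)"

definition XX :: "nat \<Rightarrow> real" where "XX n = Lw (real n) * ln (real n) / St a (real n)"

lemma LL_repr: "eventually (\<lambda>u. LL u = (Lw (exp u) / Lw (real (NN u))) * XX (NN u) * St a (exp u) * u powr \<gamma> * (u / ln (real (NN u)))) at_top"
proof -
  obtain A where A: "\<And>x. x \<ge> A \<Longrightarrow> Lw x > 0" using sv_pos[OF svw] by blast
  have ev: "eventually (\<lambda>u. real (NN u) \<ge> max A 2) at_top"
    using NNreal_lim[unfolded filterlim_at_top, rule_format, of "max A 2"] .
  from ev eventually_ge_at_top[of 1] show ?thesis
  proof eventually_elim
    case (elim u)
    have Lp: "Lw (real (NN u)) > 0" using elim A by simp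
    have lp: "ln (real (NN u)) > 0" using elim by simp
    have Sp: "St a (real (NN u)) > 0" by (rule Spos)
    have pw: "u powr (1 + \<gamma>) = u powr \<gamma> * u" using elim by (simp add: powr_add)
    show ?case unfolding LL_def XX_def St_exp pw using Lp lp Sp by (simp add: field_simps)
  qed
qed

lemma XXlim: "(XX \<longlongrightarrow> \<gamma>) sequentially"
  unfolding XX_def by (rule key_lim)

lemma cu_lim: "c > 0 \<Longrightarrow> filterlim (\<lambda>u::real. c * u) at_top at_top" by real_asymp

lemma LL_ratio_lt1:
  assumes c: "0 < c" "c < 1"
  shows "((\<lambda>u. LL (c * u) / LL u) \<longlongrightarrow> 1) at_top"
proof -
  define R where "R u = Lw (exp u) / Lw (real (NN u))" for u
  define V where "V u = u / ln (real (NN u))" for u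
  have cl: "filterlim (\<lambda>u::real. c * u) at_top at_top" by (rule cu_lim[OF c(1)])
  have lim: "((\<lambda>u. (R (c * u) / R u) * (XX (NN (c * u)) / XX (NN u)) * (St a (exp (c * u)) / St a (exp u)) *
      ((c * u) powr \<gamma> / u powr \<gamma>) * (V (c * u) / V u)) \<longlongrightarrow> (1 / 1) * (\<gamma> / \<gamma>) * c powr (- \<gamma>) * c powr \<gamma> * (1 / 1)) at_top"
  proof (intro tendsto_intros)
    show "((\<lambda>u. R (c * u)) \<longlongrightarrow> 1) at_top" unfolding R_def by (rule filterlim_compose[OF Rlim cl])
    show "(R \<longlongrightarrow> 1) at_top" unfolding R_def by (rule Rlim)
    show "((\<lambda>u. XX (NN (c * u))) \<longlongrightarrow> \<gamma>) at_top" by (rule filterlim_compose[OF XXlim filterlim_compose[OF NN_lim cl]])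
    show "((\<lambda>u. XX (NN u)) \<longlongrightarrow> \<gamma>) at_top" by (rule filterlim_compose[OF XXlim NN_lim])
    show "((\<lambda>u. St a (exp (c * u)) / St a (exp u)) \<longlongrightarrow> c powr (- \<gamma>)) at_top" by (rule Shat[OF c])
    show "((\<lambda>u. V (c * u)) \<longlongrightarrow> 1) at_top" unfolding V_def by (rule filterlim_compose[OF Vlim cl])
    show "(V \<longlongrightarrow> 1) at_top" unfolding V_def by (rule Vlim)
    have "((\<lambda>u. c powr \<gamma>) \<longlongrightarrow> c powr \<gamma>) at_top" by simp
    moreover have "eventually (\<lambda>u. c powr \<gamma> = (c * u) powr \<gamma> / u powr \<gamma>) at_top"
      using eventually_gt_at_top[of 0] by eventually_elim (use c in \<open>simp add: powr_mult\<close>)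
    ultimately show "((\<lambda>u. (c * u) powr \<gamma> / u powr \<gamma>) \<longlongrightarrow> c powr \<gamma>) at_top"
      by (rule Lim_transform_eventually)
  qed (use \<gamma> in auto)
  have one: "(1 / 1) * (\<gamma> / \<gamma>) * c powr (- \<gamma>) * c powr \<gamma> * (1 / 1) = (1::real)"
    using \<gamma> c by (simp add: powr_add[symmetric])
  show ?thesis
  proof (rule Lim_transform_eventually[OF lim[unfolded one]])
    have e2: "eventually (\<lambda>u. LL (c * u) = R (c * u) * XX (NN (c * u)) * St a (exp (c * u)) * (c * u) powr \<gamma> * V (c * u)) at_top"
      using eventually_compose_filterlim[OF LL_repr cl] unfolding R_def V_def .
    from LL_repr e2 show "eventually (\<lambda>u. (R (c * u) / R u) * (XX (NN (c * u)) / XX (NN u)) * (St a (exp (c * u)) / St a (exp u)) *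
      ((c * u) powr \<gamma> / u powr \<gamma>) * (V (c * u) / V u) = LL (c * u) / LL u) at_top"
    proof eventually_elim
      case (elim u)
      show ?case unfolding elim(2) elim(1)[folded R_def V_def] by (simp add: times_divide_times_eq)
    qed
  qed
qed

lemma LL_sv: "slowly_varying LL"
  unfolding slowly_varying_def
proof (intro conjI allI impI)
  obtain A where A: "\<And>x. x \<ge> A \<Longrightarrow> Lw x > 0" using sv_pos[OF svw] by blast
  define a0 where "a0 = max (max (ln (max x0 1)) (ln (max A 1))) 1"
  have a0: "x0 \<le> exp x" "A \<le> exp x" "x \<ge> 1" if "x \<ge> a0" for x
  proof -
    have "ln (max x0 1) \<le> x" "ln (max A 1) \<le> x" "x \<ge> 1" using that unfolding a0_def by auto
    then have "max x0 1 \<le> exp x" "max A 1 \<le> exp x" using exp_le_cancel_iff exp_ln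
      by (metis max.strict_coboundedI2 zero_less_one)+
    then show "x0 \<le> exp x" "A \<le> exp x" "x \<ge> 1" using \<open>x \<ge> 1\<close> by auto
  qed
  have LLpos: "LL x > 0" if "x \<ge> a0" for x
    unfolding LL_def using A[OF a0(2)[OF that]] a0(3)[OF that] by simp
  define g where "g x = Lw (exp (max a0 x))" for x
  have ganti: "g y \<le> g x" if "x \<le> y" for x y
    unfolding g_def using that a0(1)[of "max a0 x"] by (intro antiD) auto
  have gm: "g \<in> borel_measurable borel"
  proof -
    have "mono (\<lambda>x. - g x)" using ganti by (auto simp: mono_def)
    then have "(\<lambda>x. - g x) \<in> borel_measurable borel" by (rule borel_measurable_mono)
    then have "(\<lambda>x. - (- g x)) \<in> borel_measurable borel" by measurable
    then show ?thesis by simp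
  qed
  note gm[measurable]
  have "(\<lambda>x. if a0 \<le> x then g x * x powr (1 + \<gamma>) else 0) \<in> borel_measurable borel" by measurable
  moreover have "(\<lambda>x. if a0 \<le> x then g x * x powr (1 + \<gamma>) else 0) = (\<lambda>x. if a0 \<le> x then LL x else 0)"
    unfolding g_def LL_def by (auto simp: max_def)
  ultimately show "\<exists>a. (\<forall>x\<ge>a. LL x > 0) \<and> (\<lambda>x. if a \<le> x then LL x else 0) \<in> borel_measurable borel"
    using LLpos by (intro exI[of _ a0]) auto
  fix c :: real assume c: "c > 0"
  show "((\<lambda>x. LL (c * x) / LL x) \<longlongrightarrow> 1) at_top"
  proof (cases "c < 1")
    case True then show ?thesis using LL_ratio_lt1 c by simp
  next
    case False
    show ?thesis
    proof (cases "c = 1")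
      case True
      have "eventually (\<lambda>x. 1 = LL (c * x) / LL x) at_top"
        using eventually_ge_at_top[of a0]
      proof eventually_elim
        case (elim x)
        then have "LL x > 0" by (rule LLpos)
        then show ?case using True by simp
      qed
      then show ?thesis by (rule Lim_transform_eventually[OF tendsto_const])
    next
      case False
      with \<open>\<not> c < 1\<close> have c1: "c > 1" by simp
      have "((\<lambda>v. LL ((1/c) * v) / LL v) \<longlongrightarrow> 1) at_top"
        using c1 by (intro LL_ratio_lt1) auto
      from filterlim_compose[OF this cu_lim[OF c]]
      have "((\<lambda>u. LL u / LL (c * u)) \<longlongrightarrow> 1) at_top" using c by simp
      then have "((\<lambda>u. 1 / (LL u / LL (c * u))) \<longlongrightarrow> 1 / 1) at_top" by (intro tendsto_intros) auto
      then show ?thesis by simp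
    qed
  qed
qed

lemma part3_final: "\<exists>L. slowly_varying L \<and>
    (\<forall>\<^sub>F n in sequentially. Lw (real n) = L (ln (real n)) / ln (real n) powr (1 + \<gamma>))"
proof (intro exI[of _ LL] conjI LL_sv)
  show "\<forall>\<^sub>F n in sequentially. Lw (real n) = LL (ln (real n)) / ln (real n) powr (1 + \<gamma>)"
    using eventually_ge_at_top[of 2]
  proof eventually_elim
    case (elim n)
    then have "ln (real n) > 0" by simp
    then show ?case using elim unfolding LL_def by simp
  qed
qed

end


context tailseq
begin

lemma mono_contra:
  assumes svw: "slowly_varying Lw" and mono: "mono_on {x0..} Lw"
    and ak: "(\<lambda>k. a k / (Lw (real k) / real k)) \<longlonglongrightarrow> 1"
  shows False
proof -
  obtain A where A: "\<And>x. x \<ge> A \<Longrightarrow> Lw x > 0" using sv_pos[OF svw] by blast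
  define x1 where "x1 = max (max x0 A) 1"
  define c where "c = Lw x1"
  have c: "c > 0" unfolding c_def x1_def by (intro A) auto
  have e1: "eventually (\<lambda>k. \<bar>a k / (Lw (real k) / real k) - 1\<bar> < 1/2) sequentially"
    using ak[unfolded tendsto_iff dist_real_def, rule_format, of "1/2"] by simp
  have e2: "eventually (\<lambda>k::nat. real k \<ge> x1) sequentially"
    using filterlim_real_sequentially[unfolded filterlim_at_top, rule_format, of x1] .
  from e1 e2 have "eventually (\<lambda>k. norm ((c/2) * inverse (real k)) \<le> a k) sequentially"
  proof eventually_elim
    case (elim k)
    have kp: "real k > 0" "real k \<ge> 1" using elim unfolding x1_def by auto
    have Lk: "Lw (real k) \<ge> c" unfolding c_def using mono elim unfolding monotone_on_def x1_def by auto
    then have Lkp: "Lw (real k) > 0" using c by simp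
    define b where "b = Lw (real k) / real k"
    have bp: "b > 0" unfolding b_def using Lkp kp by simp
    have "\<bar>(a k - b) / b\<bar> < 1/2" using elim bp unfolding b_def[symmetric] by (simp add: diff_divide_distrib)
    then have "\<bar>a k - b\<bar> < 1/2 * b" using bp by (simp add: abs_div pos_divide_less_eq)
    moreover have "- (a k - b) \<le> \<bar>a k - b\<bar>" by (rule abs_ge_minus_self)
    ultimately have "a k \<ge> b / 2" by linarith
    moreover have "b / 2 \<ge> (c/2) * inverse (real k)" unfolding b_def using Lk kp
      by (simp add: field_simps divide_right_mono)
    ultimately show ?case using c kp by simp
  qed
  then have "summable (\<lambda>k. (c/2) * inverse (real k))"
    by (rule summable_comparison_test_ev[OF _ a_summable])
  then have "summable (\<lambda>k. (2/c) * ((c/2) * inverse (real k)))" by (rule summable_mult)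
  then have "summable (\<lambda>k. inverse (real k))" using c by simp
  then show False using not_summable_harmonic by blast
qed

end

theorem proposition1p3:
  fixes w :: "nat \<Rightarrow> real" and \<rho> :: real and Lw :: "real \<Rightarrow> real"
  assumes w_nonneg: "\<And>n. w n \<ge> 0"
    and rho_pos: "\<rho> > 0"
    and Lw_sv: "slowly_varying Lw"
    and w_asymp: "w \<sim>[sequentially] (\<lambda>n. Lw (real n) * (real n) powr (-1) * \<rho> powr (- real n))"
    and W_fin: "summable (\<lambda>n. w n * \<rho> ^ n)"
    and W_pos: "gen_fun w \<rho> > 0"
  shows
    "((\<forall>t. 0 < t \<and> t < 1 \<longrightarrow>
          convergent (\<lambda>n. tail_prob w \<rho> (real n powr t) / tail_prob w \<rho> (real n)))
      \<longleftrightarrow> (\<exists>\<gamma>\<ge>0. \<forall>t. 0 < t \<and> t < 1 \<longrightarrow>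
          (\<lambda>n. tail_prob w \<rho> (real n powr t) / tail_prob w \<rho> (real n)) \<longlonglongrightarrow> t powr (- \<gamma>)))
    \<and> (\<forall>\<gamma> L. \<gamma> > 0 \<and> slowly_varying L \<and>
          (\<forall>\<^sub>F n in sequentially. Lw (real n) = L (ln (real n)) / ln (real n) powr (1 + \<gamma>))
        \<longrightarrow> (\<forall>t. 0 < t \<and> t < 1 \<longrightarrow>
              (\<lambda>n. tail_prob w \<rho> (real n powr t) / tail_prob w \<rho> (real n)) \<longlonglongrightarrow> t powr (- \<gamma>))
          \<and> (\<lambda>n. tail_prob w \<rho> (real n)) \<sim>[sequentially]
              (\<lambda>n. L (ln (real n)) / (gen_fun w \<rho> * \<gamma> * ln (real n) powr \<gamma>)))
    \<and> (\<forall>\<gamma>. \<gamma> > 0 \<and> (\<exists>x0. mono_on {x0..} Lw \<or> antimono_on {x0..} Lw) \<and>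
          (\<forall>t. 0 < t \<and> t < 1 \<longrightarrow>
              (\<lambda>n. tail_prob w \<rho> (real n powr t) / tail_prob w \<rho> (real n)) \<longlonglongrightarrow> t powr (- \<gamma>))
        \<longrightarrow> (\<exists>L. slowly_varying L \<and>
              (\<forall>\<^sub>F n in sequentially. Lw (real n) = L (ln (real n)) / ln (real n) powr (1 + \<gamma>))))"
proof -
  define a where "a k = w k * \<rho> ^ k" for k
  define W where "W = gen_fun w \<rho>"
  have Wp: "W > 0" using W_pos unfolding W_def .
  interpret tailseq a
  proof
    show "a k \<ge> 0" for k unfolding a_def using w_nonneg rho_pos by simp
    show "summable a" unfolding a_def using W_fin .
  qed
  have tp: "tail_prob w \<rho> x = St a x / W" for x
    unfolding tail_prob_def St_def a_def W_def ..
  have rat: "tail_prob w \<rho> x / tail_prob w \<rho> y = St a x / St a y" for x y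
    unfolding tp using Wp by simp
  have a1: "a \<sim>[sequentially] (\<lambda>n. Lw (real n) * (real n) powr (-1) * \<rho> powr (- real n) * \<rho> ^ n)"
    unfolding a_def by (intro asymp_equiv_mult w_asymp asymp_equiv_refl)
  have eqn: "Lw (real n) * (real n) powr (-1) * \<rho> powr (- real n) * \<rho> ^ n = Lw (real n) / real n" for n
  proof -
    have "\<rho> powr (- real n) * \<rho> ^ n = 1" using rho_pos by (simp add: powr_minus powr_realpow[symmetric])
    moreover have "real n powr (-1) = 1 / real n" by (cases "n = 0") (simp_all add: powr_minus_divide)
    ultimately show ?thesis by (simp add: divide_inverse mult.assoc)
  qed
  have fe: "(\<lambda>n. Lw (real n) * (real n) powr (-1) * \<rho> powr (- real n) * \<rho> ^ n) = (\<lambda>n. Lw (real n) / real n)"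
    using eqn by (intro ext)
  have aeq: "a \<sim>[sequentially] (\<lambda>n. Lw (real n) / real n)" using a1 unfolding fe .
  obtain A where A: "\<And>x. x \<ge> A \<Longrightarrow> Lw x > 0" using sv_pos[OF Lw_sv] by blast
  have evb: "eventually (\<lambda>k::nat. Lw (real k) / real k > 0) sequentially"
  proof -
    have "eventually (\<lambda>k::nat. real k \<ge> max A 1) sequentially"
      using filterlim_real_sequentially[unfolded filterlim_at_top, rule_format, of "max A 1"] .
    then show ?thesis by eventually_elim (use A in auto)
  qed
  have "eventually (\<lambda>k. a k \<noteq> 0 \<or> Lw (real k) / real k \<noteq> 0) sequentially"
    using evb by eventually_elim (metis less_irrefl)
  then have ak: "(\<lambda>k. a k / (Lw (real k) / real k)) \<longlonglongrightarrow> 1"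
    by (rule asymp_equivD_strong[OF aeq])
  have apos: "eventually (\<lambda>k. a k > 0) sequentially"
  proof -
    have "eventually (\<lambda>k. a k / (Lw (real k) / real k) > 0) sequentially"
      using order_tendstoD(1)[OF ak, of 0] by simp
    with evb show ?thesis by eventually_elim (auto simp: zero_less_divide_iff zero_less_mult_iff)
  qed
  have P1: "(\<forall>t. 0 < t \<and> t < 1 \<longrightarrow>
          convergent (\<lambda>n. tail_prob w \<rho> (real n powr t) / tail_prob w \<rho> (real n)))
      \<longleftrightarrow> (\<exists>\<gamma>\<ge>0. \<forall>t. 0 < t \<and> t < 1 \<longrightarrow>
          (\<lambda>n. tail_prob w \<rho> (real n powr t) / tail_prob w \<rho> (real n)) \<longlonglongrightarrow> t powr (- \<gamma>))"
    unfolding rat by (rule part1[OF apos])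
  have P2: "(\<forall>\<gamma> L. \<gamma> > 0 \<and> slowly_varying L \<and>
          (\<forall>\<^sub>F n in sequentially. Lw (real n) = L (ln (real n)) / ln (real n) powr (1 + \<gamma>))
        \<longrightarrow> (\<forall>t. 0 < t \<and> t < 1 \<longrightarrow>
              (\<lambda>n. tail_prob w \<rho> (real n powr t) / tail_prob w \<rho> (real n)) \<longlonglongrightarrow> t powr (- \<gamma>))
          \<and> (\<lambda>n. tail_prob w \<rho> (real n)) \<sim>[sequentially]
              (\<lambda>n. L (ln (real n)) / (gen_fun w \<rho> * \<gamma> * ln (real n) powr \<gamma>)))"
  proof (intro allI impI)
    fix \<gamma> :: real and L :: "real \<Rightarrow> real"
    assume h: "\<gamma> > 0 \<and> slowly_varying L \<and>
          (\<forall>\<^sub>F n in sequentially. Lw (real n) = L (ln (real n)) / ln (real n) powr (1 + \<gamma>))"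
    then have \<gamma>: "\<gamma> > 0" and svL: "slowly_varying L"
      and evL: "\<forall>\<^sub>F n in sequentially. Lw (real n) = L (ln (real n)) / ln (real n) powr (1 + \<gamma>)" by auto
    have ab: "(\<lambda>k. a k / (L (ln (real k)) * ff \<gamma> (real k))) \<longlonglongrightarrow> 1"
    proof (rule Lim_transform_eventually[OF ak])
      show "eventually (\<lambda>k. a k / (Lw (real k) / real k) = a k / (L (ln (real k)) * ff \<gamma> (real k))) sequentially"
        using evL eventually_ge_at_top[of 2]
      proof eventually_elim
        case (elim k)
        have pw: "ln (real k) powr (1 + \<gamma>) > 0" "real k > 0" using elim by auto
        have "L (ln (real k)) * ff \<gamma> (real k) = Lw (real k) / real k"
          unfolding ff_def elim(1) using pw by (simp add: field_simps)
        then show ?case by simp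
      qed
    qed
    have asy: "(\<lambda>n. St a (real n) / (L (ln (real n)) / (\<gamma> * ln (real n) powr \<gamma>))) \<longlonglongrightarrow> 1"
      by (rule part2_asymp[OF \<gamma> svL ab])
    show "(\<forall>t. 0 < t \<and> t < 1 \<longrightarrow>
              (\<lambda>n. tail_prob w \<rho> (real n powr t) / tail_prob w \<rho> (real n)) \<longlonglongrightarrow> t powr (- \<gamma>))
          \<and> (\<lambda>n. tail_prob w \<rho> (real n)) \<sim>[sequentially]
              (\<lambda>n. L (ln (real n)) / (gen_fun w \<rho> * \<gamma> * ln (real n) powr \<gamma>))"
    proof (intro conjI allI impI)
      fix t :: real assume t: "0 < t \<and> t < 1"
      show "(\<lambda>n. tail_prob w \<rho> (real n powr t) / tail_prob w \<rho> (real n)) \<longlonglongrightarrow> t powr (- \<gamma>)"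
        unfolding rat using part2_ratio[OF \<gamma> svL apos asy] t by auto
    next
      have hlp: "(x / W) / (y / (W * z)) = x / (y / z)" for x y z :: real
      proof -
        have "y / (W * z) = (y / z) / W" by (simp add: field_simps)
        then show ?thesis using Wp by simp
      qed
      have "(\<lambda>n. tail_prob w \<rho> (real n) / (L (ln (real n)) / (gen_fun w \<rho> * \<gamma> * ln (real n) powr \<gamma>))) =
          (\<lambda>n. St a (real n) / (L (ln (real n)) / (\<gamma> * ln (real n) powr \<gamma>)))"
        unfolding tp W_def[symmetric] mult.assoc hlp ..
      then show "(\<lambda>n. tail_prob w \<rho> (real n)) \<sim>[sequentially]
              (\<lambda>n. L (ln (real n)) / (gen_fun w \<rho> * \<gamma> * ln (real n) powr \<gamma>))"
        using asy by (intro asymp_equivI') simp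
    qed
  qed
  have P3: "(\<forall>\<gamma>. \<gamma> > 0 \<and> (\<exists>x0. mono_on {x0..} Lw \<or> antimono_on {x0..} Lw) \<and>
          (\<forall>t. 0 < t \<and> t < 1 \<longrightarrow>
              (\<lambda>n. tail_prob w \<rho> (real n powr t) / tail_prob w \<rho> (real n)) \<longlonglongrightarrow> t powr (- \<gamma>))
        \<longrightarrow> (\<exists>L. slowly_varying L \<and>
              (\<forall>\<^sub>F n in sequentially. Lw (real n) = L (ln (real n)) / ln (real n) powr (1 + \<gamma>))))"
  proof (intro allI impI)
    fix \<gamma> :: real
    assume h: "\<gamma> > 0 \<and> (\<exists>x0. mono_on {x0..} Lw \<or> antimono_on {x0..} Lw) \<and>
          (\<forall>t. 0 < t \<and> t < 1 \<longrightarrow>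
              (\<lambda>n. tail_prob w \<rho> (real n powr t) / tail_prob w \<rho> (real n)) \<longlonglongrightarrow> t powr (- \<gamma>))"
    then obtain x0 where \<gamma>: "\<gamma> > 0" and mo: "mono_on {x0..} Lw \<or> antimono_on {x0..} Lw"
      and hyp: "\<And>t. 0 < t \<Longrightarrow> t < 1 \<Longrightarrow> (\<lambda>n. St a (real n powr t) / St a (real n)) \<longlonglongrightarrow> t powr (- \<gamma>)"
      unfolding rat by blast
    show "\<exists>L. slowly_varying L \<and>
              (\<forall>\<^sub>F n in sequentially. Lw (real n) = L (ln (real n)) / ln (real n) powr (1 + \<gamma>))"
    proof (cases "antimono_on {x0..} Lw")
      case True
      interpret p3 a \<gamma> x0 Lw
        by unfold_locales (use \<gamma> Lw_sv True ak apos hyp in auto)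
      show ?thesis by (rule part3_final)
    next
      case False
      with mo have "mono_on {x0..} Lw" by simp
      from mono_contra[OF Lw_sv this ak] show ?thesis ..
    qed
  qed
  show ?thesis using P1 P2 P3 by blast
qed


end
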